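(* Let $n\ge 2$ be an integer. For $i=1,2$ let $X_{i1},\dots,X_{in}$ be a random sample from the density $\frac{1}{\sigma}e^{-(x-\mu_i)/\sigma}$, $x\ge\mu_i$, the two samples independent, $\underline{\theta}=(\mu_1,\mu_2,\sigma)\in\mathbb{R}^2\times(0,\infty)$. Let $X_i=\min_jX_{ij}$, $S=\sum_{i=1}^2\sum_{j=1}^n(X_{ij}-X_i)$, $Z_1=\min\{X_1,X_2\}$, $\mu_S=\mu_1I(X_1\le X_2)+\mu_2I(X_2<X_1)$, $\mu=n(\max\{\mu_1,\mu_2\}-\min\{\mu_1,\mu_2\})/\sigma$. For $c\in\mathbb{R}$ let $d_c=Z_1-cS$ and $\mathcal{D}_2=\{d_c:c\in\mathbb{R}\}$. The risk $R(\underline{\theta},d_c)=\mathbb{E}_{\underline{\theta}}\left[\left(\frac{d_c-\mu_S}{\sigma}\right)^2\right]$ depends on $\underline{\theta}$ only through $\mu\ge0$; write it $R_\mu(d_c)$. Let $k_0=\frac{1}{2n(2n-1)}$ and $k_2=\frac{1}{n(2n-1)}$. (a) Every $d_c$ with $c\in[k_0,k_2]$ is admissible within $\mathcal{D}_2$, and every $d_c$ with $c\in(-\infty,k_0)\cup(k_2,\infty)$ is inadmissible; more precisely, if $-\infty<b<c\le k_0$ or $k_2\le c<b<\infty$, then $R_\mu(d_c)<R_\mu(d_b)$ for all $\mu\ge0$. (b) The estimator $d_{k_2}$ is minimax within $\mathcal{D}_2$, i.e. $\sup_{\mu\ge0}R_\mu(d_{k_2})=\inf_{c\in\mathbb{R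}}\sup_{\mu\ge0}R_\mu(d_c)$.
   Context: $I(A)$ is the indicator of $A$. An estimator in $\mathcal{D}_2$ is admissible within $\mathcal{D}_2$ if no other estimator in $\mathcal{D}_2$ has risk $\le$ its risk for all $\mu\ge0$ with strict inequality for some $\mu$. *)

theory Defs
  imports "HOL-Probability.Probability"
begin

definition shexp_density :: "real \<Rightarrow> real \<Rightarrow> real \<Rightarrow> real" where
  "shexp_density mu sg x = (if x < mu then 0 else (1 / sg) * exp (- (x - mu) / sg))"

definition sample_law :: "nat \<Rightarrow> real \<Rightarrow> real \<Rightarrow> real \<Rightarrow> ((nat \<times> nat) \<Rightarrow> real) measure" where
  "sample_law n mu1 mu2 sg =
     PiM ({1,2} \<times> {..<n})
       (\<lambda>(i,j). density lborel (\<lambda>x. ennreal (shexp_density (if i = 1 then mu1 else mu2) sg x)))"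

definition Xmin :: "nat \<Rightarrow> ((nat \<times> nat) \<Rightarrow> real) \<Rightarrow> nat \<Rightarrow> real" where
  "Xmin n \<omega> i = Min ((\<lambda>j. \<omega> (i,j)) ` {..<n})"

definition Sstat :: "nat \<Rightarrow> ((nat \<times> nat) \<Rightarrow> real) \<Rightarrow> real" where
  "Sstat n \<omega> = (\<Sum>i\<in>{1,2}. \<Sum>j<n. (\<omega> (i,j) - Xmin n \<omega> i))"

definition Z1 :: "nat \<Rightarrow> ((nat \<times> nat) \<Rightarrow> real) \<Rightarrow> real" where
  "Z1 n \<omega> = min (Xmin n \<omega> 1) (Xmin n \<omega> 2)"

definition muS :: "nat \<Rightarrow> real \<Rightarrow> real \<Rightarrow> ((nat \<times> nat) \<Rightarrow> real) \<Rightarrow> real" where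
  "muS n mu1 mu2 \<omega> = (if Xmin n \<omega> 1 \<le> Xmin n \<omega> 2 then mu1 else mu2)"

definition d_est :: "nat \<Rightarrow> real \<Rightarrow> ((nat \<times> nat) \<Rightarrow> real) \<Rightarrow> real" where
  "d_est n c \<omega> = Z1 n \<omega> - c * Sstat n \<omega>"

definition risk :: "nat \<Rightarrow> real \<Rightarrow> real \<Rightarrow> real \<Rightarrow> real \<Rightarrow> real" where
  "risk n c mu1 mu2 sg =
     (\<integral>\<omega>. ((d_est n c \<omega> - muS n mu1 mu2 \<omega>) / sg)\<^sup>2 \<partial>sample_law n mu1 mu2 sg)"

definition mu_param :: "nat \<Rightarrow> real \<Rightarrow> real \<Rightarrow> real \<Rightarrow> real" where
  "mu_param n mu1 mu2 sg = real n * (max mu1 mu2 - min mu1 mu2) / sg"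

text \<open>R_mu(d_c): the risk at a representative parameter with mu_param = m.\<close>
definition Rmu :: "nat \<Rightarrow> real \<Rightarrow> real \<Rightarrow> real" where
  "Rmu n c m = risk n c 0 (m / real n) 1"

definition admissible_D2 :: "nat \<Rightarrow> real \<Rightarrow> bool" where
  "admissible_D2 n c \<longleftrightarrow>
     \<not> (\<exists>b. (\<forall>m\<ge>0. Rmu n b m \<le> Rmu n c m) \<and> (\<exists>m\<ge>0. Rmu n b m < Rmu n c m))"

definition k0 :: "nat \<Rightarrow> real" where
  "k0 n = 1 / (2 * real n * (2 * real n - 1))"

definition k2 :: "nat \<Rightarrow> real" where
  "k2 n = 1 / (real n * (2 * real n - 1))"

end

theory Submission
  imports Defs
begin

definition ED :: "real \<Rightarrow> real" where "ED t = (if t < 0 then 0 else exp (- t))"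
definition EE :: "(real \<Rightarrow> real) \<Rightarrow> real" where "EE g = (\<integral>t. ED t * g t \<partial>lborel)"

lemma ED_nonneg[simp]: "0 \<le> ED t" by (simp add: ED_def)
lemma ED_meas[measurable]: "ED \<in> borel_measurable borel" unfolding ED_def by measurable

lemma Ex_cong: "(\<And>t. 0 \<le> t \<Longrightarrow> g t = h t) \<Longrightarrow> EE g = EE h"
  unfolding EE_def by (intro Bochner_Integration.integral_cong) (auto simp: ED_def)

lemma hbi_ED_pow: "has_bochner_integral lborel (\<lambda>x. ED x * x ^ k) (fact k)"
proof (rule has_bochner_integral_nn_integral)
  show "AE x in lborel. 0 \<le> ED x * x ^ k" by (auto simp: ED_def)
  have "(\<integral>\<^sup>+ x. ennreal (ED x * x ^ k) \<partial>lborel) = (\<integral>\<^sup>+x. ennreal (x^k * exp (-x)) * indicator {0 ..} x \<partial>lborel)"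
    by (intro nn_integral_cong) (auto simp: ED_def split: split_indicator)
  also have "\<dots> = ennreal (fact k)" by (simp add: nn_intergal_power_times_exp_Ici)
  finally show "(\<integral>\<^sup>+ x. ennreal (ED x * x ^ k) \<partial>lborel) = ennreal (fact k)" .
qed auto

lemma integrable_ED_pow: "integrable lborel (\<lambda>x. ED x * x ^ k)"
  by (rule integrable.intros[OF hbi_ED_pow])

lemma Ex_pow: "EE (\<lambda>t. t ^ k) = fact k"
  unfolding EE_def using hbi_ED_pow by (rule has_bochner_integral_integral_eq)

lemma Ex_integrable:
  assumes [measurable]: "g \<in> borel_measurable borel" and b: "\<And>t. 0 \<le> t \<Longrightarrow> \<bar>g t\<bar> \<le> A + B * t\<^sup>2"
  shows "integrable lborel (\<lambda>t. ED t * g t)"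
proof (rule Bochner_Integration.integrable_bound)
  show "integrable lborel (\<lambda>t. A * (ED t * t ^ 0) + B * (ED t * t ^ 2))"
    by (intro Bochner_Integration.integrable_add Bochner_Integration.integrable_mult_right integrable_ED_pow)
  show "AE t in lborel. norm (ED t * g t) \<le> norm (A * (ED t * t ^ 0) + B * (ED t * t ^ 2))"
  proof (intro AE_I2)
    fix t :: real
    show "norm (ED t * g t) \<le> norm (A * (ED t * t ^ 0) + B * (ED t * t ^ 2))"
    proof (cases "t < 0")
      case True then show ?thesis by (simp add: ED_def)
    next
      case False
      then have "\<bar>g t\<bar> \<le> A + B * t\<^sup>2" using b by auto
      then have "ED t * \<bar>g t\<bar> \<le> ED t * (A + B * t\<^sup>2)" by (intro mult_left_mono) auto
      then show ?thesis by (simp add: abs_mult algebra_simps)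
    qed
  qed
qed measurable


definition hbE :: "(real \<Rightarrow> real) \<Rightarrow> real \<Rightarrow> bool" where
  "hbE g v \<longleftrightarrow> has_bochner_integral lborel (\<lambda>t. ED t * g t) v"

lemma hbE_Ex: "hbE g v \<Longrightarrow> EE g = v"
  unfolding hbE_def EE_def by (rule has_bochner_integral_integral_eq)

lemma hbE_add: "hbE f a \<Longrightarrow> hbE g b \<Longrightarrow> hbE (\<lambda>t. f t + g t) (a + b)"
  unfolding hbE_def by (drule (1) has_bochner_integral_add) (simp add: algebra_simps)

lemma hbE_cmult: "hbE f a \<Longrightarrow> hbE (\<lambda>t. c * f t) (c * a)"
proof -
  assume "hbE f a"
  then have "has_bochner_integral lborel (\<lambda>t. c * (ED t * f t)) (c * a)"
    unfolding hbE_def by (intro has_bochner_integral_mult_right)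
  then show ?thesis unfolding hbE_def by (simp add: mult.left_commute)
qed

lemma hbE_cong: "hbE f a \<Longrightarrow> (\<And>t. 0 \<le> t \<Longrightarrow> f t = g t) \<Longrightarrow> a = b \<Longrightarrow> hbE g b"
  unfolding hbE_def
  by (erule has_bochner_integral_cong[THEN iffD1, rotated -1]) (auto simp: ED_def)

lemma hbE_pow: "hbE (\<lambda>t. t ^ k) (fact k)"
  unfolding hbE_def by (rule hbi_ED_pow)

lemma hbE_iff: "hbE g v \<longleftrightarrow> integrable lborel (\<lambda>t. ED t * g t) \<and> EE g = v"
  unfolding hbE_def EE_def has_bochner_integral_iff ..

lemma Ex_scale:
  assumes c: "0 < c"
  shows "(\<integral>t. ED t * (g t * exp (- (c - 1) * t)) \<partial>lborel) = (1 / c) * EE (\<lambda>s. g (s / c))"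
proof -
  have "(\<integral>t. ED t * (g t * exp (- (c - 1) * t)) \<partial>lborel)
      = \<bar>1/c\<bar> *\<^sub>R (\<integral>x. ED (0 + (1/c) * x) * (g (0 + (1/c) * x) * exp (- (c - 1) * (0 + (1/c) * x))) \<partial>lborel)"
    using c by (intro lborel_integral_real_affine) auto
  also have "(\<lambda>x. ED (0 + (1/c) * x) * (g (0 + (1/c) * x) * exp (- (c - 1) * (0 + (1/c) * x)))) = (\<lambda>x. ED x * g (x / c))"
  proof
    fix x :: real
    have "exp (- ((1/c) * x)) * exp (- (c - 1) * ((1/c) * x)) = exp (- ((1/c) * x) + - (c - 1) * ((1/c) * x))"
      by (simp add: exp_add[symmetric])
    also have "- ((1/c) * x) + - (c - 1) * ((1/c) * x) = - x" using c by (simp add: field_simps)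
    finally have e: "exp (- ((1/c) * x)) * exp (- (c - 1) * ((1/c) * x)) = exp (- x)" .
    have "(1/c) * x < 0 \<longleftrightarrow> x < 0" using c by (simp add: divide_less_0_iff)
    then show "ED (0 + (1/c) * x) * (g (0 + (1/c) * x) * exp (- (c - 1) * (0 + (1/c) * x))) = ED x * g (x / c)"
      using e unfolding ED_def by (auto simp: algebra_simps)
  qed
  finally show ?thesis using c by (simp add: EE_def)
qed

lemma Ex_erlang:
  assumes c: "0 < c"
  shows "(\<integral>y. exponential_density c y * h y \<partial>lborel) = EE (\<lambda>t. h (t / c))"
proof -
  have "(\<integral>y. exponential_density c y * h y \<partial>lborel)
      = \<bar>1/c\<bar> *\<^sub>R (\<integral>x. exponential_density c (0 + (1/c) * x) * h (0 + (1/c) * x) \<partial>lborel)"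
    using c by (intro lborel_integral_real_affine) auto
  also have "(\<lambda>x. exponential_density c (0 + (1/c) * x) * h (0 + (1/c) * x)) = (\<lambda>x. c * (ED x * h (x / c)))"
    using c by (auto simp: ED_def exponential_density_def field_simps zero_le_divide_iff)
  finally show ?thesis using c by (simp add: EE_def)
qed

lemma Ex_shift:
  assumes a: "0 \<le> a"
  shows "EE (\<lambda>t. if a \<le> t then g t else 0) = exp (- a) * EE (\<lambda>s. g (a + s))"
proof -
  have "EE (\<lambda>t. if a \<le> t then g t else 0)
      = \<bar>1\<bar> *\<^sub>R (\<integral>x. ED (a + 1 * x) * (if a \<le> a + 1 * x then g (a + 1 * x) else 0) \<partial>lborel)"
    unfolding EE_def by (intro lborel_integral_real_affine) auto
  also have "(\<lambda>x. ED (a + 1 * x) * (if a \<le> a + 1 * x then g (a + 1 * x) else 0)) = (\<lambda>x. exp (- a) * (ED x * g (a + x)))"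
    using a by (auto simp: ED_def exp_add[symmetric])
  finally show ?thesis by (simp add: EE_def)
qed

lemma hbE_pow_exp: "k \<le> 2 \<Longrightarrow> hbE (\<lambda>t. t ^ k * exp (- t)) (fact k / 2 ^ (k + 1))"
proof -
  assume k: "k \<le> 2"
  have int: "integrable lborel (\<lambda>t. ED t * (t ^ k * exp (- t)))"
  proof (rule Ex_integrable[where A=1 and B=1])
    fix t :: real assume t: "0 \<le> t"
    have "t ^ k \<le> 1 + t\<^sup>2"
    proof -
      consider "k = 0" | "k = 1" | "k = 2" using k by linarith
      then show ?thesis
      proof cases
        case 2
        have "0 \<le> (t - 1) * (t - 1)" by simp
        then have "t \<le> 1 + t\<^sup>2" using t by (simp add: power2_eq_square algebra_simps)
        then show ?thesis using 2 by simp
      qed simp_all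
    qed
    moreover have "exp (- t) \<le> 1" using t by simp
    moreover have "0 \<le> t ^ k" using t by simp
    ultimately have "t ^ k * exp (- t) \<le> 1 + 1 * t\<^sup>2"
      using mult_mono[of "t^k" "1 + t\<^sup>2" "exp (-t)" 1] by simp
    then show "\<bar>t ^ k * exp (- t)\<bar> \<le> 1 + 1 * t\<^sup>2"
      using t by (simp add: abs_mult)
  qed simp
  have "EE (\<lambda>t. t ^ k * exp (- t)) = (1 / 2) * EE (\<lambda>s. (s / 2) ^ k)"
    using Ex_scale[of 2 "\<lambda>t. t ^ k"] by (simp add: EE_def)
  also have "\<dots> = (1/2) * (EE (\<lambda>s. s ^ k) / 2 ^ k)"
    by (simp add: power_divide EE_def)
  also have "\<dots> = fact k / 2 ^ (k + 1)" by (simp add: Ex_pow)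
  finally show ?thesis using int by (simp add: hbE_iff)
qed

lemma hbE_exp0: "hbE (\<lambda>t. exp (- t)) (1/2)"
  using hbE_pow_exp[of 0] by simp
lemma hbE_exp1: "hbE (\<lambda>t. t * exp (- t)) (1/4)"
  using hbE_pow_exp[of 1] by simp
lemma hbE_exp2: "hbE (\<lambda>t. t\<^sup>2 * exp (- t)) (1/4)"
  using hbE_pow_exp[of 2] by (simp add: fact_numeral)

lemma hbE_const: "hbE (\<lambda>t. c) c"
  using hbE_cmult[OF hbE_pow[of 0], of c] by simp

lemma Ex_poly_exp:
  "hbE (\<lambda>u. p0 + p1 * u + p2 * u\<^sup>2 + (q0 + q1 * u + q2 * u\<^sup>2) * exp (- u))
       (p0 + p1 + 2 * p2 + q0 / 2 + q1 / 4 + q2 / 4)"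
proof -
  have "hbE (\<lambda>u. p0 * u ^ 0 + p1 * u ^ 1 + p2 * u ^ 2 + (q0 * (exp (- u)) + q1 * (u * exp (- u)) + q2 * (u\<^sup>2 * exp (- u))))
       (p0 * fact 0 + p1 * fact 1 + p2 * fact 2 + (q0 * (1/2) + q1 * (1/4) + q2 * (1/4)))"
    by (intro hbE_add hbE_cmult hbE_pow hbE_exp0 hbE_exp1 hbE_exp2)
  then show ?thesis
    by (rule hbE_cong) (auto simp: algebra_simps)
qed

lemma hbE_shift:
  assumes a: "0 \<le> a" and d: "hbE (\<lambda>u. d (a + u)) v"
  shows "hbE (\<lambda>t. if a \<le> t then d t else 0) (exp (- a) * v)"
proof -
  let ?f = "\<lambda>t. ED t * (if a \<le> t then d t else 0)"
  have eq: "(\<lambda>x. ?f (a + 1 * x)) = (\<lambda>x. exp (- a) * (ED x * d (a + x)))"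
    using a by (auto simp: ED_def exp_add[symmetric])
  have "integrable lborel (\<lambda>x. exp (- a) * (ED x * d (a + x)))"
    using d unfolding hbE_iff by auto
  then have "integrable lborel (\<lambda>x. ?f (a + 1 * x))" by (simp only: eq)
  then have i: "integrable lborel ?f"
    using lborel_integrable_real_affine_iff[of 1 ?f a] by simp
  have "EE (\<lambda>t. if a \<le> t then d t else 0) = exp (- a) * v"
    using Ex_shift[OF a, of d] d by (simp add: hbE_iff)
  with i show ?thesis by (simp add: hbE_iff)
qed

definition tk :: "real \<Rightarrow> real \<Rightarrow> real \<Rightarrow> real" where
  "tk \<delta> s t = (if s \<le> t + \<delta> then s else t)"

definition F1 :: "real \<Rightarrow> real \<Rightarrow> real" where
  "F1 \<delta> s = (if s - \<delta> \<le> 0 then s else 1 + exp (- (s - \<delta>)) * (\<delta> - 1))"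
definition F2 :: "real \<Rightarrow> real \<Rightarrow> real" where
  "F2 \<delta> s = (if s - \<delta> \<le> 0 then s\<^sup>2 else 2 + exp (- (s - \<delta>)) * (s\<^sup>2 - (s - \<delta>)\<^sup>2 - 2 * (s - \<delta>) - 2))"

lemma inner1: "hbE (\<lambda>t. tk \<delta> s t) (F1 \<delta> s)"
proof (cases "s - \<delta> \<le> 0")
  case True
  show ?thesis
    by (rule hbE_cong[OF hbE_const[of s]]) (use True in \<open>auto simp: tk_def F1_def\<close>)
next
  case False
  let ?a = "s - \<delta>"
  have "hbE (\<lambda>t. t ^ 1 + (if ?a \<le> t then s - t else 0)) (fact 1 + exp (- ?a) * (s - ?a - 1))"
  proof (intro hbE_add hbE_pow hbE_shift)
    show "0 \<le> ?a" using False by simp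
    show "hbE (\<lambda>u. s - (?a + u)) (s - ?a - 1)"
      by (rule hbE_cong[OF Ex_poly_exp[of "s - ?a" "-1" 0 0 0 0]]) auto
  qed
  then show ?thesis
    by (rule hbE_cong) (use False in \<open>auto simp: tk_def F1_def\<close>)
qed

lemma inner2: "hbE (\<lambda>t. (tk \<delta> s t)\<^sup>2) (F2 \<delta> s)"
proof (cases "s - \<delta> \<le> 0")
  case True
  show ?thesis
    by (rule hbE_cong[OF hbE_const[of "s\<^sup>2"]]) (use True in \<open>auto simp: tk_def F2_def\<close>)
next
  case False
  let ?a = "s - \<delta>"
  have "hbE (\<lambda>t. t ^ 2 + (if ?a \<le> t then s\<^sup>2 - t\<^sup>2 else 0)) (fact 2 + exp (- ?a) * (s\<^sup>2 - ?a\<^sup>2 - 2 * ?a - 2))"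
  proof (intro hbE_add hbE_pow hbE_shift)
    show "0 \<le> ?a" using False by simp
    show "hbE (\<lambda>u. s\<^sup>2 - (?a + u)\<^sup>2) (s\<^sup>2 - ?a\<^sup>2 - 2 * ?a - 2)"
      by (rule hbE_cong[OF Ex_poly_exp[of "s\<^sup>2 - ?a\<^sup>2" "-2 * ?a" "-1" 0 0 0]])
         (auto simp: power2_eq_square algebra_simps)
  qed
  then show ?thesis
    by (rule hbE_cong) (use False in \<open>auto simp: tk_def F2_def fact_numeral\<close>)
qed

definition G1 :: "real \<Rightarrow> real" where "G1 m = 1 - exp (- m) * (1 + m) / 2"
definition G2 :: "real \<Rightarrow> real" where "G2 m = 2 - exp (- m) * (m\<^sup>2 + 3 * m + 3) / 2"

lemma outer1: "hbE (F1 \<delta>) (G1 \<bar>\<delta>\<bar>)"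
proof (cases "0 \<le> \<delta>")
  case True
  have "hbE (\<lambda>s. s ^ 1 + (if \<delta> \<le> s then F1 \<delta> s - s else 0)) (fact 1 + exp (- \<delta>) * (- (\<delta> + 1) / 2))"
  proof (intro hbE_add hbE_pow hbE_shift)
    show "0 \<le> \<delta>" by fact
    show "hbE (\<lambda>u. F1 \<delta> (\<delta> + u) - (\<delta> + u)) (- (\<delta> + 1) / 2)"
      by (rule hbE_cong[OF Ex_poly_exp[of "1 - \<delta>" "-1" 0 "\<delta> - 1" 0 0]])
         (auto simp: F1_def field_simps)
  qed
  then show ?thesis
    by (rule hbE_cong) (use True in \<open>auto simp: F1_def G1_def field_simps\<close>)
next
  case False
  have e: "exp (- (s - \<delta>)) = exp \<delta> * exp (- s)" "exp (\<delta> - s) = exp \<delta> * exp (- s)" for s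
    by (simp_all add: exp_add[symmetric])
  show ?thesis
    by (rule hbE_cong[OF Ex_poly_exp[of 1 0 0 "exp \<delta> * (\<delta> - 1)" 0 0]])
       (use False in \<open>auto simp: F1_def G1_def e field_simps\<close>)
qed

lemma outer2: "hbE (F2 \<delta>) (G2 \<bar>\<delta>\<bar>)"
proof (cases "0 \<le> \<delta>")
  case True
  have "hbE (\<lambda>s. s ^ 2 + (if \<delta> \<le> s then F2 \<delta> s - s\<^sup>2 else 0)) (fact 2 + exp (- \<delta>) * (- (\<delta>\<^sup>2 + 3 * \<delta> + 3) / 2))"
  proof (intro hbE_add hbE_pow hbE_shift)
    show "0 \<le> \<delta>" by fact
    show "hbE (\<lambda>u. F2 \<delta> (\<delta> + u) - (\<delta> + u)\<^sup>2) (- (\<delta>\<^sup>2 + 3 * \<delta> + 3) / 2)"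
      by (rule hbE_cong[OF Ex_poly_exp[of "2 - \<delta>\<^sup>2" "- 2 * \<delta>" "-1" "\<delta>\<^sup>2 - 2" "2 * \<delta> - 2" 0]])
         (auto simp: F2_def field_simps power2_eq_square)
  qed
  then show ?thesis
    by (rule hbE_cong) (use True in \<open>auto simp: F2_def G2_def field_simps power2_eq_square fact_numeral\<close>)
next
  case False
  have e: "exp (- (s - \<delta>)) = exp \<delta> * exp (- s)" "exp (\<delta> - s) = exp \<delta> * exp (- s)" for s
    by (simp_all add: exp_add[symmetric])
  show ?thesis
    by (rule hbE_cong[OF Ex_poly_exp[of 2 0 0 "exp \<delta> * (- \<delta>\<^sup>2 + 2 * \<delta> - 2)" "exp \<delta> * (2 * \<delta> - 2)" 0]])
       (use False in \<open>auto simp: F2_def G2_def e field_simps power2_eq_square\<close>)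
qed

lemma Gk1: "EE (\<lambda>s. EE (\<lambda>t. tk \<delta> s t)) = G1 \<bar>\<delta>\<bar>"
proof -
  have "EE (\<lambda>s. EE (\<lambda>t. tk \<delta> s t)) = EE (F1 \<delta>)"
    using inner1 by (intro Ex_cong) (simp add: hbE_Ex)
  then show ?thesis using outer1 hbE_Ex by simp
qed

lemma Gk2: "EE (\<lambda>s. EE (\<lambda>t. (tk \<delta> s t)\<^sup>2)) = G2 \<bar>\<delta>\<bar>"
proof -
  have "EE (\<lambda>s. EE (\<lambda>t. (tk \<delta> s t)\<^sup>2)) = EE (F2 \<delta>)"
    using inner2 by (intro Ex_cong) (simp add: hbE_Ex)
  then show ?thesis using outer2 hbE_Ex by simp
qed

definition Dm :: "real \<Rightarrow> real \<Rightarrow> real measure" where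
  "Dm mu sg = density lborel (\<lambda>x. ennreal (shexp_density mu sg x))"

definition EXPm :: "real measure" where
  "EXPm = density lborel (\<lambda>x. ennreal (exponential_density 1 x))"

lemma shexp_meas[measurable]: "shexp_density mu sg \<in> borel_measurable borel"
  unfolding shexp_density_def by measurable

lemma shexp_nonneg: "0 < sg \<Longrightarrow> 0 \<le> shexp_density mu sg x"
  by (simp add: shexp_density_def)

lemma ED_expd: "(\<lambda>x. exponential_density 1 x) = ED"
  by (auto simp: fun_eq_iff ED_def exponential_density_def)

lemma sets_Dm[simp, measurable_cong]: "sets (Dm mu sg) = sets borel"
  by (simp add: Dm_def)
lemma space_Dm[simp]: "space (Dm mu sg) = UNIV"
  by (simp add: Dm_def)
lemma sets_EXPm[simp, measurable_cong]: "sets EXPm = sets borel"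
  by (simp add: EXPm_def)

lemma prob_EXPm: "prob_space EXPm"
  unfolding EXPm_def by (rule prob_space_exponential_density) simp

lemma Dm_distr:
  assumes sg: "0 < sg"
  shows "Dm mu sg = distr EXPm lborel (\<lambda>t. mu + sg * t)"
proof -
  interpret prob_space EXPm by (rule prob_EXPm)
  have d: "distributed EXPm lborel (\<lambda>x. x) (\<lambda>x. ennreal (exponential_density 1 x))"
    unfolding distributed_def
    by (auto simp: EXPm_def intro!: distr_id2)
  have "distr EXPm lborel (\<lambda>x. mu + sg * x) = density lborel (\<lambda>x. ennreal (exponential_density 1 ((x - mu) / sg)) / \<bar>sg\<bar>)"
    using distributed_affine[OF d, of sg mu] sg by (simp add: distributed_def)
  also have "\<dots> = Dm mu sg"
    unfolding Dm_def
  proof (intro arg_cong[where f="density lborel"] ext)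
    fix x :: real
    show "ennreal (exponential_density 1 ((x - mu) / sg)) / ennreal \<bar>sg\<bar> = ennreal (shexp_density mu sg x)"
      using sg by (subst divide_ennreal)
        (auto simp: exponential_density_def shexp_density_def divide_less_0_iff field_simps)
  qed
  finally show ?thesis ..
qed

lemma prob_Dm: "0 < sg \<Longrightarrow> prob_space (Dm mu sg)"
  using Dm_distr[of sg mu] prob_space.prob_space_distr[OF prob_EXPm, of "\<lambda>t. mu + sg * t" lborel]
  by simp

lemma integral_Dm:
  assumes sg: "0 < sg" and [measurable]: "f \<in> borel_measurable borel"
  shows "integral\<^sup>L (Dm mu sg) f = EE (\<lambda>t. f (mu + sg * t))"
proof -
  have "integral\<^sup>L (Dm mu sg) f = integral\<^sup>L EXPm (\<lambda>t. f (mu + sg * t))"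
    by (simp add: Dm_distr[OF sg] integral_distr)
  also have "\<dots> = EE (\<lambda>t. f (mu + sg * t))"
    unfolding EXPm_def EE_def
    by (subst integral_density) (auto simp: ED_expd)
  finally show ?thesis .
qed

lemma integrable_Dm:
  assumes sg: "0 < sg" and [measurable]: "f \<in> borel_measurable borel"
  shows "integrable (Dm mu sg) f \<longleftrightarrow> integrable lborel (\<lambda>t. ED t * f (mu + sg * t))"
proof -
  have "integrable (Dm mu sg) f \<longleftrightarrow> integrable EXPm (\<lambda>t. f (mu + sg * t))"
    by (simp add: Dm_distr[OF sg] integrable_distr_eq)
  also have "\<dots> \<longleftrightarrow> integrable lborel (\<lambda>t. ED t * f (mu + sg * t))"
    unfolding EXPm_def
    by (subst integrable_density) (auto simp: ED_expd)
  finally show ?thesis .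
qed

lemma integrable_Dm_sq:
  assumes sg: "0 < sg"
  shows "integrable (Dm mu sg) (\<lambda>x. x\<^sup>2)"
proof -
  have "integrable lborel (\<lambda>t. ED t * (mu + sg * t)\<^sup>2)"
  proof (rule Ex_integrable[where A="2 * mu\<^sup>2" and B="2 * sg\<^sup>2"])
    fix t :: real
    have "(mu + sg * t)\<^sup>2 \<le> 2 * mu\<^sup>2 + 2 * sg\<^sup>2 * t\<^sup>2"
      using sum_power2_ge_zero[of "mu - sg * t" 0] by (simp add: power2_eq_square algebra_simps)
    then show "\<bar>(mu + sg * t)\<^sup>2\<bar> \<le> 2 * mu\<^sup>2 + 2 * sg\<^sup>2 * t\<^sup>2" by simp
  qed simp
  then show ?thesis using integrable_Dm[OF sg, of "\<lambda>x. x\<^sup>2"] by simp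
qed

lemma prob_Q: "0 < sg \<Longrightarrow> prob_space (PiM J (\<lambda>_. Dm mu sg))"
  by (intro prob_space_PiM prob_Dm)

lemma Dm_comp_meas: "j \<in> J \<Longrightarrow> (\<lambda>\<omega>. \<omega> j) \<in> measurable (PiM J (\<lambda>_. Dm mu sg)) borel"
proof -
  assume j: "j \<in> J"
  have "(\<lambda>\<omega>. \<omega> j) \<in> measurable (PiM J (\<lambda>_. Dm mu sg)) (Dm mu sg)"
    using j by (rule measurable_component_singleton)
  moreover have "measurable (PiM J (\<lambda>_. Dm mu sg)) (Dm mu sg) = measurable (PiM J (\<lambda>_. Dm mu sg)) borel"
    by (rule measurable_cong_sets) auto
  ultimately show ?thesis by simp
qed

lemma F1_law:
  assumes sg: "0 < sg" and J: "finite J" "J \<noteq> {}"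
  shows "distributed (PiM J (\<lambda>_. Dm mu sg)) lborel (\<lambda>\<omega>. Min ((\<lambda>j. (\<omega> j - mu) / sg) ` J))
           (\<lambda>x. ennreal (exponential_density (real (card J)) x))"
proof -
  let ?Q = "PiM J (\<lambda>_. Dm mu sg)"
  interpret prob_space ?Q by (rule prob_Q[OF sg])
  have indep: "indep_vars (\<lambda>_. borel) (\<lambda>j \<omega>. \<omega> j) J"
  proof (subst indep_vars_iff_distr_eq_PiM'[OF J(2)])
    show "random_variable borel (\<lambda>\<omega>. \<omega> j)" if "j \<in> J" for j
      using that by (rule Dm_comp_meas)
    have "distr ?Q (Pi\<^sub>M J (\<lambda>i. borel)) (\<lambda>x. restrict x J) = distr ?Q (Pi\<^sub>M J (\<lambda>i. borel)) (\<lambda>x. x)"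
      by (intro distr_cong) (auto simp: space_PiM)
    also have "\<dots> = ?Q"
      by (intro distr_id2 sets_PiM_cong) auto
    also have "\<dots> = Pi\<^sub>M J (\<lambda>i. distr ?Q borel (\<lambda>\<omega>. \<omega> i))"
    proof (intro PiM_cong refl)
      fix i assume i: "i \<in> J"
      have "distr ?Q borel (\<lambda>\<omega>. \<omega> i) = distr ?Q (Dm mu sg) (\<lambda>\<omega>. \<omega> i)"
        by (intro distr_cong) auto
      also have "\<dots> = Dm mu sg"
        using distr_PiM_component[of J "\<lambda>_. Dm mu sg" i] prob_Dm[OF sg] i by simp
      finally show "Dm mu sg = distr ?Q borel (\<lambda>\<omega>. \<omega> i)" ..
    qed
    finally show "distr ?Q (Pi\<^sub>M J (\<lambda>i. borel)) (\<lambda>x. restrict x J) = Pi\<^sub>M J (\<lambda>i. distr ?Q borel (\<lambda>\<omega>. \<omega> i))" .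
  qed
  have indep2: "indep_vars (\<lambda>_. borel) (\<lambda>j \<omega>. (\<omega> j - mu) / sg) J"
    using indep_vars_compose2[OF indep, of "\<lambda>j x. (x - mu) / sg" "\<lambda>_. borel"] by simp
  have expd: "distributed ?Q lborel (\<lambda>\<omega>. (\<omega> j - mu) / sg) (\<lambda>x. ennreal (exponential_density 1 x))"
    if j: "j \<in> J" for j
  proof -
    have cm: "(\<lambda>\<omega>. \<omega> j) \<in> measurable ?Q (Dm mu sg)"
      using j by (rule measurable_component_singleton)
    have am: "(\<lambda>x. (x - mu) / sg) \<in> measurable (Dm mu sg) lborel"
      by (simp add: measurable_cong_sets[OF sets_Dm refl])
    have "distr (distr ?Q (Dm mu sg) (\<lambda>\<omega>. \<omega> j)) lborel (\<lambda>x. (x - mu) / sg) = distr ?Q lborel ((\<lambda>x. (x - mu) / sg) \<circ> (\<lambda>\<omega>. \<omega> j))"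
      by (rule distr_distr[OF am cm])
    then have "distr ?Q lborel (\<lambda>\<omega>. (\<omega> j - mu) / sg) = distr (distr ?Q (Dm mu sg) (\<lambda>\<omega>. \<omega> j)) lborel (\<lambda>x. (x - mu) / sg)"
      by (simp add: comp_def)
    also have "\<dots> = distr (Dm mu sg) lborel (\<lambda>x. (x - mu) / sg)"
      using distr_PiM_component[of J "\<lambda>_. Dm mu sg" j] prob_Dm[OF sg] j by simp
    also have "\<dots> = distr (distr EXPm lborel (\<lambda>t. mu + sg * t)) lborel (\<lambda>x. (x - mu) / sg)"
      by (simp add: Dm_distr[OF sg])
    also have "\<dots> = distr EXPm lborel ((\<lambda>x. (x - mu) / sg) \<circ> (\<lambda>t. mu + sg * t))"
      by (rule distr_distr) (simp_all add: measurable_cong_sets[OF sets_EXPm refl])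
    also have "\<dots> = distr EXPm lborel (\<lambda>t. (mu + sg * t - mu) / sg)"
      by (simp add: comp_def)
    also have "\<dots> = distr EXPm lborel (\<lambda>t. t)"
      using sg by (intro distr_cong) auto
    also have "\<dots> = EXPm" by (intro distr_id2) simp
    moreover have "(\<lambda>\<omega>. (\<omega> j - mu) / sg) \<in> borel_measurable ?Q"
      using Dm_comp_meas[OF j, of mu sg] by measurable
    ultimately show ?thesis
      unfolding distributed_def EXPm_def by simp
  qed
  have "distributed ?Q lborel (\<lambda>\<omega>. Min ((\<lambda>j. (\<omega> j - mu) / sg) ` J)) (\<lambda>x. ennreal (exponential_density (\<Sum>j\<in>J. 1) x))"
    by (rule exponential_distributed_Min[OF J _ expd indep2]) auto
  then show ?thesis by simp
qed

lemma Min_affine: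
  fixes \<omega> :: "'i \<Rightarrow> real"
  assumes sg: "0 < sg" and J: "finite J" "J \<noteq> {}"
  shows "Min ((\<lambda>j. \<omega> j) ` J) = mu + sg * Min ((\<lambda>j. (\<omega> j - mu) / sg) ` J)"
proof -
  have m: "mono (\<lambda>y::real. mu + sg * y)" using sg by (auto intro!: monoI)
  have "mu + sg * Min ((\<lambda>j. (\<omega> j - mu) / sg) ` J) = Min ((\<lambda>y. mu + sg * y) ` ((\<lambda>j. (\<omega> j - mu) / sg) ` J))"
    using J by (intro mono_Min_commute[OF m]) auto
  also have "(\<lambda>y. mu + sg * y) ` ((\<lambda>j. (\<omega> j - mu) / sg) ` J) = (\<lambda>j. \<omega> j) ` J"
    using sg by (auto simp: image_image)
  finally show ?thesis ..
qed

lemma F1_int: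
  assumes sg: "0 < sg" and J: "finite J" "J \<noteq> {}" and [measurable]: "\<phi> \<in> borel_measurable borel"
  shows "(\<integral>\<omega>. \<phi> (Min ((\<lambda>j. \<omega> j) ` J)) \<partial>PiM J (\<lambda>_. Dm mu sg)) = EE (\<lambda>t. \<phi> (mu + sg * (t / real (card J))))"
proof -
  let ?Q = "PiM J (\<lambda>_. Dm mu sg)"
  let ?Y = "\<lambda>\<omega>. Min ((\<lambda>j. (\<omega> j - mu) / sg) ` J)"
  have D: "distributed ?Q lborel ?Y (\<lambda>x. ennreal (exponential_density (real (card J)) x))"
    by (rule F1_law[OF sg J])
  have Ym: "?Y \<in> measurable ?Q lborel" by (rule distributed_measurable[OF D])
  have phm: "(\<lambda>y. \<phi> (mu + sg * y)) \<in> borel_measurable lborel" by measurable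
  have k: "0 < real (card J)" using J by (simp add: card_gt_0_iff)
  have "(\<integral>\<omega>. \<phi> (Min ((\<lambda>j. \<omega> j) ` J)) \<partial>?Q) = (\<integral>\<omega>. \<phi> (mu + sg * ?Y \<omega>) \<partial>?Q)"
    using Min_affine[OF sg J] by simp
  also have "\<dots> = integral\<^sup>L (distr ?Q lborel ?Y) (\<lambda>y. \<phi> (mu + sg * y))"
    by (rule integral_distr[OF Ym phm, symmetric])
  also have "\<dots> = integral\<^sup>L (density lborel (\<lambda>x. ennreal (exponential_density (real (card J)) x))) (\<lambda>y. \<phi> (mu + sg * y))"
    by (simp only: distributed_distr_eq_density[OF D])
  also have "\<dots> = (\<integral>y. exponential_density (real (card J)) y * \<phi> (mu + sg * y) \<partial>lborel)"
    using k by (subst integral_density) (auto intro!: exponential_density_nonneg)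
  also have "\<dots> = EE (\<lambda>t. \<phi> (mu + sg * (t / real (card J))))"
    by (rule Ex_erlang[OF k])
  finally show ?thesis .
qed

lemma abs_mult_le_sq: "\<bar>a\<bar> * \<bar>b\<bar> \<le> a\<^sup>2 + (b::real)\<^sup>2"
proof -
  have "0 \<le> (\<bar>a\<bar> - \<bar>b\<bar>)\<^sup>2" by simp
  then have h: "2 * (\<bar>a\<bar> * \<bar>b\<bar>) \<le> a\<^sup>2 + b\<^sup>2" by (simp add: power2_diff)
  have "0 \<le> \<bar>a\<bar> * \<bar>b\<bar>" by simp
  with h show ?thesis by linarith
qed

lemma PiM_integrable_bound:
  fixes K :: "'i \<Rightarrow> real measure" and C :: real
  assumes J: "finite J" and P: "\<And>j. j \<in> J \<Longrightarrow> prob_space (K j)"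
    and S: "\<And>j. j \<in> J \<Longrightarrow> sets (K j) = sets borel"
    and I2: "\<And>j. j \<in> J \<Longrightarrow> integrable (K j) (\<lambda>x. x\<^sup>2)"
    and f[measurable]: "f \<in> borel_measurable (PiM J K)"
    and b: "\<And>\<omega>. \<omega> \<in> space (PiM J K) \<Longrightarrow> \<bar>f \<omega>\<bar> \<le> C * (1 + (\<Sum>j\<in>J. \<bar>\<omega> j\<bar>))\<^sup>2"
  shows "integrable (PiM J K) f"
proof -
  interpret prob_space "PiM J K" by (intro prob_space_PiM P)
  have comp: "integrable (PiM J K) (\<lambda>\<omega>. g (\<omega> j))"
    if j: "j \<in> J" and g: "integrable (K j) g" for g :: "real \<Rightarrow> real" and j
  proof -
    have gm: "g \<in> borel_measurable (K j)" using g by auto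
    have "integrable (distr (PiM J K) (K j) (\<lambda>\<omega>. \<omega> j)) g"
      using g distr_PiM_component[of J K j] P j by simp
    then show ?thesis
      by (subst (asm) integrable_distr_eq) (auto intro: measurable_component_singleton[OF j] gm)
  qed
  have gb: "g \<in> borel_measurable (K j)" if "j \<in> J" "g \<in> borel_measurable borel" for g :: "real \<Rightarrow> real" and j
    by (subst measurable_cong_sets[OF S[OF that(1)] refl]) (rule that(2))
  have abs: "integrable (K j) (\<lambda>x. \<bar>x\<bar>)" if j: "j \<in> J" for j
  proof -
    interpret Kj: prob_space "K j" by (rule P[OF j])
    show ?thesis
    proof (rule Bochner_Integration.integrable_bound[where f="\<lambda>x. 1 + x\<^sup>2"])
      show "integrable (K j) (\<lambda>x. 1 + x\<^sup>2)" using I2[OF j] by auto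
      show "(\<lambda>x. \<bar>x\<bar>) \<in> borel_measurable (K j)" by (rule gb[OF j]) simp
      show "AE x in K j. norm \<bar>x\<bar> \<le> norm (1 + x\<^sup>2)"
      proof (intro AE_I2)
        fix x :: real
        have "0 \<le> (\<bar>x\<bar> - 1)\<^sup>2" by simp
        then have "\<bar>x\<bar> \<le> 1 + x\<^sup>2" by (simp add: power2_eq_square algebra_simps abs_mult_self_eq)
        then show "norm \<bar>x\<bar> \<le> norm (1 + x\<^sup>2)" by simp
      qed
    qed
  qed
  have prod: "integrable (PiM J K) (\<lambda>\<omega>. \<bar>\<omega> i\<bar> * \<bar>\<omega> j\<bar>)" if "i \<in> J" "j \<in> J" for i j
  proof (rule Bochner_Integration.integrable_bound[where f="\<lambda>\<omega>. (\<omega> i)\<^sup>2 + (\<omega> j)\<^sup>2"])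
    show "integrable (PiM J K) (\<lambda>\<omega>. (\<omega> i)\<^sup>2 + (\<omega> j)\<^sup>2)"
      using that by (intro Bochner_Integration.integrable_add comp I2)
    have [measurable]: "(\<lambda>\<omega>. \<omega> l) \<in> borel_measurable (PiM J K)" if "l \<in> J" for l
      using measurable_component_singleton[OF that, of K] measurable_cong_sets[OF refl S[OF that], of "PiM J K"] by simp
    show "(\<lambda>\<omega>. \<bar>\<omega> i\<bar> * \<bar>\<omega> j\<bar>) \<in> borel_measurable (PiM J K)" using that by measurable
    show "AE \<omega> in PiM J K. norm (\<bar>\<omega> i\<bar> * \<bar>\<omega> j\<bar>) \<le> norm ((\<omega> i)\<^sup>2 + (\<omega> j)\<^sup>2)"
    proof (intro AE_I2)
      fix \<omega> :: "'i \<Rightarrow> real"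
      have "\<bar>\<omega> i\<bar> * \<bar>\<omega> j\<bar> \<le> (\<omega> i)\<^sup>2 + (\<omega> j)\<^sup>2" by (rule abs_mult_le_sq)
      then show "norm (\<bar>\<omega> i\<bar> * \<bar>\<omega> j\<bar>) \<le> norm ((\<omega> i)\<^sup>2 + (\<omega> j)\<^sup>2)" by simp
    qed
  qed
  have G: "integrable (PiM J K) (\<lambda>\<omega>. C * (1 + 2 * (\<Sum>j\<in>J. \<bar>\<omega> j\<bar>) + (\<Sum>i\<in>J. \<Sum>j\<in>J. \<bar>\<omega> i\<bar> * \<bar>\<omega> j\<bar>)))"
    by (intro Bochner_Integration.integrable_mult_right Bochner_Integration.integrable_add
        Bochner_Integration.integrable_sum integrable_const prod comp abs) auto
  show ?thesis
  proof (rule Bochner_Integration.integrable_bound[OF G f])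
    show "AE \<omega> in PiM J K. norm (f \<omega>) \<le> norm (C * (1 + 2 * (\<Sum>j\<in>J. \<bar>\<omega> j\<bar>) + (\<Sum>i\<in>J. \<Sum>j\<in>J. \<bar>\<omega> i\<bar> * \<bar>\<omega> j\<bar>)))"
    proof (intro AE_I2 impI)
      fix \<omega> assume "\<omega> \<in> space (PiM J K)"
      have eq: "(1 + (\<Sum>j\<in>J. \<bar>\<omega> j\<bar>))\<^sup>2 = 1 + 2 * (\<Sum>j\<in>J. \<bar>\<omega> j\<bar>) + (\<Sum>i\<in>J. \<Sum>j\<in>J. \<bar>\<omega> i\<bar> * \<bar>\<omega> j\<bar>)"
        by (simp add: power2_eq_square algebra_simps sum_product)
      have nn: "0 \<le> 1 + 2 * (\<Sum>j\<in>J. \<bar>\<omega> j\<bar>) + (\<Sum>i\<in>J. \<Sum>j\<in>J. \<bar>\<omega> i\<bar> * \<bar>\<omega> j\<bar>)"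
        unfolding eq[symmetric] by simp
      note eq
      moreover have "C * (1 + (\<Sum>j\<in>J. \<bar>\<omega> j\<bar>))\<^sup>2 \<le> \<bar>C\<bar> * (1 + (\<Sum>j\<in>J. \<bar>\<omega> j\<bar>))\<^sup>2"
        by (rule mult_right_mono) auto
      ultimately show "norm (f \<omega>) \<le> norm (C * (1 + 2 * (\<Sum>j\<in>J. \<bar>\<omega> j\<bar>) + (\<Sum>i\<in>J. \<Sum>j\<in>J. \<bar>\<omega> i\<bar> * \<bar>\<omega> j\<bar>)))"
        using b[OF \<open>\<omega> \<in> space (PiM J K)\<close>] by (simp add: abs_mult abs_of_nonneg[OF nn])
    qed
  qed
qed

definition Mn :: "'i set \<Rightarrow> ('i \<Rightarrow> real) \<Rightarrow> real" where
  "Mn J \<omega> = Min ((\<lambda>j. \<omega> j) ` J)"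
definition Sn :: "'i set \<Rightarrow> ('i \<Rightarrow> real) \<Rightarrow> real" where
  "Sn J \<omega> = (\<Sum>j\<in>J. (\<omega> j - Mn J \<omega>))"
definition Ln :: "'i set \<Rightarrow> ('i \<Rightarrow> real) \<Rightarrow> real" where
  "Ln J \<omega> = (\<Sum>j\<in>J. \<bar>\<omega> j\<bar>)"

lemma Ln_nonneg: "0 \<le> Ln J \<omega>" unfolding Ln_def by (simp add: sum_nonneg)

lemma Mn_meas: "finite J \<Longrightarrow> J \<subseteq> I \<Longrightarrow> Mn J \<in> borel_measurable (PiM I (\<lambda>_. Dm mu sg))"
  unfolding Mn_def by (rule borel_measurable_Min) (auto intro: Dm_comp_meas)

lemma Sn_meas: "finite J \<Longrightarrow> J \<subseteq> I \<Longrightarrow> Sn J \<in> borel_measurable (PiM I (\<lambda>_. Dm mu sg))"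
  unfolding Sn_def
  by (intro borel_measurable_sum borel_measurable_diff Mn_meas) (auto intro: Dm_comp_meas)

lemma Mn_le: "finite J \<Longrightarrow> j \<in> J \<Longrightarrow> Mn J \<omega> \<le> \<omega> j"
  unfolding Mn_def by (rule Min_le) auto

lemma Mn_in: "finite J \<Longrightarrow> J \<noteq> {} \<Longrightarrow> \<exists>j\<in>J. Mn J \<omega> = \<omega> j"
proof -
  assume J: "finite J" "J \<noteq> {}"
  have "Min ((\<lambda>j. \<omega> j) ` J) \<in> (\<lambda>j. \<omega> j) ` J" using J by (intro Min_in) auto
  then show ?thesis unfolding Mn_def by auto
qed

lemma Mn_bound: "finite J \<Longrightarrow> J \<noteq> {} \<Longrightarrow> \<bar>Mn J \<omega>\<bar> \<le> Ln J \<omega>"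
proof -
  assume J: "finite J" "J \<noteq> {}"
  then obtain j where j: "j \<in> J" "Mn J \<omega> = \<omega> j" using Mn_in by blast
  have "\<bar>\<omega> j\<bar> \<le> Ln J \<omega>" unfolding Ln_def using J j by (intro member_le_sum) auto
  then show ?thesis using j by simp
qed

lemma Sn_nonneg: "finite J \<Longrightarrow> 0 \<le> Sn J \<omega>"
  unfolding Sn_def by (intro sum_nonneg) (auto dest: Mn_le[of J _ \<omega>])

lemma Sn_bound: "finite J \<Longrightarrow> J \<noteq> {} \<Longrightarrow> \<bar>Sn J \<omega>\<bar> \<le> (1 + real (card J)) * Ln J \<omega>"
proof -
  assume J: "finite J" "J \<noteq> {}"
  have "Sn J \<omega> = (\<Sum>j\<in>J. \<omega> j) - real (card J) * Mn J \<omega>"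
    unfolding Sn_def by (simp add: sum_subtractf)
  also have "\<dots> \<le> Ln J \<omega> + real (card J) * Ln J \<omega>"
  proof -
    have "(\<Sum>j\<in>J. \<omega> j) \<le> Ln J \<omega>" unfolding Ln_def by (intro sum_mono) auto
    moreover have "- (real (card J) * Mn J \<omega>) \<le> real (card J) * Ln J \<omega>"
    proof -
      have "- Mn J \<omega> \<le> Ln J \<omega>" using Mn_bound[OF J, of \<omega>] by (rule abs_le_D2)
      from mult_left_mono[OF this, of "real (card J)"] show ?thesis by simp
    qed
    ultimately show ?thesis by simp
  qed
  finally show ?thesis using Sn_nonneg[OF J(1), of \<omega>] by (simp add: algebra_simps)
qed

lemma sq_bounds:
  fixes x :: real assumes "0 \<le> x"
  shows "1 \<le> (1 + x)\<^sup>2" "x \<le> (1 + x)\<^sup>2" "x\<^sup>2 \<le> (1 + x)\<^sup>2"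
  using assms by (auto simp: power2_eq_square algebra_simps)

lemma Q_bound:
  assumes sg: "0 < sg" and J: "finite J"
    and f: "f \<in> borel_measurable (PiM J (\<lambda>_. Dm mu sg))"
    and b: "\<And>\<omega>. \<bar>f \<omega>\<bar> \<le> C * (1 + Ln J \<omega>)\<^sup>2"
  shows "integrable (PiM J (\<lambda>_. Dm mu sg)) f"
  by (rule PiM_integrable_bound[OF J prob_Dm[OF sg] sets_Dm integrable_Dm_sq[OF sg] f])
     (use b in \<open>auto simp: Ln_def\<close>)

lemma product_sf_Dm: "0 < sg \<Longrightarrow> product_sigma_finite (\<lambda>_. Dm mu sg)"
  unfolding product_sigma_finite_def
  using prob_Dm prob_space_imp_sigma_finite by blast

lemma Q_insert:
  fixes f :: "('i \<Rightarrow> real) \<Rightarrow> real"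
  assumes sg: "0 < sg" and J: "finite J" "j \<notin> J"
    and f: "integrable (PiM (insert j J) (\<lambda>_. Dm mu sg)) f"
  shows "integral\<^sup>L (PiM (insert j J) (\<lambda>_. Dm mu sg)) f
       = (\<integral>x. (\<integral>y. f (x(j := y)) \<partial>Dm mu sg) \<partial>PiM J (\<lambda>_. Dm mu sg))"
  using product_sigma_finite.product_integral_insert[of "\<lambda>_. Dm mu sg" J j f] product_sf_Dm[OF sg, of mu] J f by simp

lemma Mn_insert:
  assumes J: "finite J" "J \<noteq> {}" "j \<notin> J"
  shows "Mn (insert j J) (x(j := y)) = min y (Mn J x)"
proof -
  have "(\<lambda>l. (x(j := y)) l) ` insert j J = insert y ((\<lambda>l. x l) ` J)"
    using J(3) by (auto simp: image_iff) 
  then show ?thesis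
    unfolding Mn_def using J by (simp add: Min_insert)
qed

lemma Sn_insert:
  assumes J: "finite J" "J \<noteq> {}" "j \<notin> J"
  shows "Sn (insert j J) (x(j := y)) = (y - min y (Mn J x)) + (\<Sum>l\<in>J. (x l - min y (Mn J x)))"
proof -
  have "Sn (insert j J) (x(j := y)) = (\<Sum>l\<in>insert j J. ((x(j := y)) l - min y (Mn J x)))"
    unfolding Sn_def Mn_insert[OF J] ..
  also have "\<dots> = (y - min y (Mn J x)) + (\<Sum>l\<in>J. ((x(j := y)) l - min y (Mn J x)))"
    using J by (simp add: sum.insert)
  also have "(\<Sum>l\<in>J. ((x(j := y)) l - min y (Mn J x))) = (\<Sum>l\<in>J. (x l - min y (Mn J x)))"
    using J(3) by (intro sum.cong) auto
  finally show ?thesis .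
qed

definition P1 :: "real \<Rightarrow> real \<Rightarrow> real \<Rightarrow> real" where
  "P1 mu sg m = (if mu \<le> m then sg * exp (- ((m - mu) / sg)) else mu + sg - m)"
definition P2 :: "real \<Rightarrow> real \<Rightarrow> real \<Rightarrow> real" where
  "P2 mu sg m = (if mu \<le> m then 2 * sg\<^sup>2 * exp (- ((m - mu) / sg)) else (mu - m)\<^sup>2 + 2 * (mu - m) * sg + 2 * sg\<^sup>2)"

lemma P1_meas[measurable]: "P1 mu sg \<in> borel_measurable borel"
  unfolding P1_def by measurable
lemma P2_meas[measurable]: "P2 mu sg \<in> borel_measurable borel"
  unfolding P2_def by measurable

lemma P1_eq:
  assumes sg: "0 < sg"
  shows "integral\<^sup>L (Dm mu sg) (\<lambda>y. max (y - m) 0) = P1 mu sg m"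
proof -
  have "integral\<^sup>L (Dm mu sg) (\<lambda>y. max (y - m) 0) = EE (\<lambda>t. max (mu + sg * t - m) 0)"
    by (rule integral_Dm[OF sg]) simp
  also have "\<dots> = P1 mu sg m"
  proof (cases "mu \<le> m")
    case True
    let ?a = "(m - mu) / sg"
    have "EE (\<lambda>t. max (mu + sg * t - m) 0) = EE (\<lambda>t. if ?a \<le> t then sg * (t - ?a) else 0)"
      using sg by (intro Ex_cong) (auto simp: field_simps max_def)
    also have "\<dots> = exp (- ?a) * EE (\<lambda>s. sg * (?a + s - ?a))"
      using True sg by (intro Ex_shift) auto
    also have "EE (\<lambda>s. sg * (?a + s - ?a)) = sg"
      using hbE_Ex[OF hbE_cmult[OF hbE_pow[of 1], of sg]] by simp
    finally show ?thesis using True by (simp add: P1_def)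
  next
    case False
    have "EE (\<lambda>t. max (mu + sg * t - m) 0) = EE (\<lambda>t. (mu - m) + sg * t + 0 * t\<^sup>2 + (0 + 0 * t + 0 * t\<^sup>2) * exp (- t))"
    proof (intro Ex_cong)
      fix t :: real assume "0 \<le> t"
      then have "0 \<le> sg * t" using sg by simp
      then show "max (mu + sg * t - m) 0 = (mu - m) + sg * t + 0 * t\<^sup>2 + (0 + 0 * t + 0 * t\<^sup>2) * exp (- t)"
        using False by (auto simp: max_def)
    qed
    also have "\<dots> = mu - m + sg"
      using hbE_Ex[OF Ex_poly_exp[of "mu - m" sg 0 0 0 0]] by simp
    finally show ?thesis using False by (simp add: P1_def)
  qed
  finally show ?thesis .
qed

lemma P2_eq:
  assumes sg: "0 < sg"
  shows "integral\<^sup>L (Dm mu sg) (\<lambda>y. (max (y - m) 0)\<^sup>2) = P2 mu sg m"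
proof -
  have "integral\<^sup>L (Dm mu sg) (\<lambda>y. (max (y - m) 0)\<^sup>2) = EE (\<lambda>t. (max (mu + sg * t - m) 0)\<^sup>2)"
    by (rule integral_Dm[OF sg]) simp
  also have "\<dots> = P2 mu sg m"
  proof (cases "mu \<le> m")
    case True
    let ?a = "(m - mu) / sg"
    have "EE (\<lambda>t. (max (mu + sg * t - m) 0)\<^sup>2) = EE (\<lambda>t. if ?a \<le> t then (sg * (t - ?a))\<^sup>2 else 0)"
    proof (intro Ex_cong)
      fix t :: real
      have e: "sg * (t - ?a) = mu + sg * t - m" using sg by (simp add: field_simps)
      have "?a \<le> t \<longleftrightarrow> 0 \<le> mu + sg * t - m" using sg by (simp add: field_simps)
      then show "(max (mu + sg * t - m) 0)\<^sup>2 = (if ?a \<le> t then (sg * (t - ?a))\<^sup>2 else 0)"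
        unfolding e by (auto simp: max_def)
    qed
    also have "\<dots> = exp (- ?a) * EE (\<lambda>s. (sg * (?a + s - ?a))\<^sup>2)"
      using True sg by (intro Ex_shift) auto
    also have "EE (\<lambda>s. (sg * (?a + s - ?a))\<^sup>2) = 2 * sg\<^sup>2"
      using hbE_Ex[OF hbE_cmult[OF hbE_pow[of 2], of "sg\<^sup>2"]] by (simp add: power_mult_distrib)
    finally show ?thesis using True by (simp add: P2_def)
  next
    case False
    have "EE (\<lambda>t. (max (mu + sg * t - m) 0)\<^sup>2) = EE (\<lambda>t. (mu - m)\<^sup>2 + 2 * (mu - m) * sg * t + sg\<^sup>2 * t\<^sup>2 + (0 + 0 * t + 0 * t\<^sup>2) * exp (- t))"
    proof (intro Ex_cong)
      fix t :: real assume "0 \<le> t"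
      then have "0 \<le> sg * t" using sg by simp
      then have "max (mu + sg * t - m) 0 = mu - m + sg * t" using False by (auto simp: max_def)
      then show "(max (mu + sg * t - m) 0)\<^sup>2 = (mu - m)\<^sup>2 + 2 * (mu - m) * sg * t + sg\<^sup>2 * t\<^sup>2 + (0 + 0 * t + 0 * t\<^sup>2) * exp (- t)"
        by (simp add: power2_eq_square algebra_simps)
    qed
    also have "\<dots> = (mu - m)\<^sup>2 + 2 * (mu - m) * sg + 2 * sg\<^sup>2"
      using hbE_Ex[OF Ex_poly_exp[of "(mu - m)\<^sup>2" "2 * (mu - m) * sg" "sg\<^sup>2" 0 0 0]] by simp
    finally show ?thesis using False by (simp add: P2_def)
  qed
  finally show ?thesis .
qed

lemma Dm_integrable_poly:
  assumes sg: "0 < sg" and [measurable]: "g \<in> borel_measurable borel"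
    and b: "\<And>y. \<bar>g y\<bar> \<le> A + B * y\<^sup>2" and B: "0 \<le> B"
  shows "integrable (Dm mu sg) g"
proof -
  have "integrable lborel (\<lambda>t. ED t * g (mu + sg * t))"
  proof (rule Ex_integrable[where A="A + 2 * B * mu\<^sup>2" and B="2 * B * sg\<^sup>2"])
    fix t :: real
    have "(mu + sg * t)\<^sup>2 \<le> 2 * mu\<^sup>2 + 2 * sg\<^sup>2 * t\<^sup>2"
      using sum_power2_ge_zero[of "mu - sg * t" 0] by (simp add: power2_eq_square algebra_simps)
    then have "B * (mu + sg * t)\<^sup>2 \<le> B * (2 * mu\<^sup>2 + 2 * sg\<^sup>2 * t\<^sup>2)" using B by (rule mult_left_mono)
    then show "\<bar>g (mu + sg * t)\<bar> \<le> A + 2 * B * mu\<^sup>2 + 2 * B * sg\<^sup>2 * t\<^sup>2"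
      using b[of "mu + sg * t"] by (simp add: algebra_simps)
  qed simp
  then show ?thesis using integrable_Dm[OF sg] by simp
qed

lemma Ex_cmult: "EE (\<lambda>t. c * g t) = c * EE g"
  unfolding EE_def by (simp add: mult.left_commute)

lemma Ex_exp_scale:
  assumes r: "1 < r"
  shows "EE (\<lambda>t. g (t / (r - 1)) * exp (- (t / (r - 1)))) = ((r - 1) / r) * EE (\<lambda>s. g (s / r))"
proof -
  let ?c = "r / (r - 1)"
  have c: "0 < ?c" using r by simp
  have "EE (\<lambda>t. g (t / (r - 1)) * exp (- (t / (r - 1)))) = (\<integral>t. ED t * (g (t / (r - 1)) * exp (- (?c - 1) * t)) \<partial>lborel)"
    unfolding EE_def
  proof (intro Bochner_Integration.integral_cong refl)
    fix t :: real
    have "- (?c - 1) * t = - (t / (r - 1))" using r by (simp add: field_simps)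
    then show "ED t * (g (t / (r - 1)) * exp (- (t / (r - 1)))) = ED t * (g (t / (r - 1)) * exp (- (?c - 1) * t))"
      by simp
  qed
  also have "\<dots> = (1 / ?c) * EE (\<lambda>s. g ((s / ?c) / (r - 1)))"
    by (rule Ex_scale[OF c])
  also have "(\<lambda>s. g ((s / ?c) / (r - 1))) = (\<lambda>s. g (s / r))"
  proof
    fix s :: real
    have nz: "r \<noteq> 0" "r - 1 \<noteq> 0" "r * r - r \<noteq> 0" using r by (auto simp: algebra_simps)
    have "(s / ?c) / (r - 1) = s / r" using nz by (simp add: field_simps)
    then show "g ((s / ?c) / (r - 1)) = g (s / r)" by simp
  qed
  finally show ?thesis by simp
qed

lemma Ex_exp_only:
  assumes r: "1 < r"
  shows "EE (\<lambda>t. exp (- (t / (r - 1)))) = (r - 1) / r"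
  using Ex_exp_scale[OF r, of "\<lambda>_. 1"] hbE_Ex[OF hbE_const[of 1]] by simp

lemma mult_bound:
  fixes u v L a A B :: real
  assumes L: "0 \<le> L" and u: "\<bar>u\<bar> \<le> a * L" and v: "\<bar>v\<bar> \<le> A + B * L"
    and a: "0 \<le> a" and A: "0 \<le> A" and B: "0 \<le> B"
  shows "\<bar>u * v\<bar> \<le> a * (A + B) * (1 + L)\<^sup>2"
proof -
  have "\<bar>u * v\<bar> = \<bar>u\<bar> * \<bar>v\<bar>" by (simp add: abs_mult)
  also have "\<dots> \<le> (a * L) * (A + B * L)"
    by (rule mult_mono[OF u v]) (use a L in auto)
  also have "\<dots> = a * (A * L + B * L\<^sup>2)" by (simp add: power2_eq_square algebra_simps)
  also have "\<dots> \<le> a * (A * (1 + L)\<^sup>2 + B * (1 + L)\<^sup>2)"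
    using sq_bounds[OF L] A B a by (intro mult_left_mono add_mono mult_left_mono) auto
  finally show ?thesis by (simp add: algebra_simps)
qed

lemma card_ge2_split:
  assumes J: "finite J" and k: "2 \<le> card J" and j: "j \<in> J"
  shows "finite (J - {j})" "J - {j} \<noteq> {}" "j \<notin> J - {j}" "insert j (J - {j}) = J"
    "real (card (J - {j})) = real (card J) - 1"
proof -
  show "finite (J - {j})" using J by simp
  show "j \<notin> J - {j}" by simp
  show "insert j (J - {j}) = J" using j by auto
  have c: "card (J - {j}) = card J - 1" using J j by (simp add: card_Diff_singleton)
  then show "real (card (J - {j})) = real (card J) - 1" using k by simp
  show "J - {j} \<noteq> {}"
  proof
    assume "J - {j} = {}"
    then have "card (J - {j}) = 0" by (simp only: card.empty)
    with c k show False by simp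
  qed
qed

lemma F2_term:
  fixes \<phi> :: "real \<Rightarrow> real"
  assumes sg: "0 < sg" and J: "finite J" and k: "2 \<le> card J" and j: "j \<in> J"
    and [measurable]: "\<phi> \<in> borel_measurable borel"
    and int: "integrable (PiM J (\<lambda>_. Dm mu sg)) (\<lambda>\<omega>. (\<omega> j - Mn J \<omega>) * \<phi> (Mn J \<omega>))"
  shows "integral\<^sup>L (PiM J (\<lambda>_. Dm mu sg)) (\<lambda>\<omega>. (\<omega> j - Mn J \<omega>) * \<phi> (Mn J \<omega>))
       = sg * ((real (card J) - 1) / real (card J)) * EE (\<lambda>s. \<phi> (mu + sg * (s / real (card J))))"
proof -
  let ?J' = "J - {j}"
  let ?r = "real (card J)"
  note S = card_ge2_split[OF J k j]
  have r: "1 < ?r" using k by simp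
  let ?f = "\<lambda>\<omega>. (\<omega> j - Mn J \<omega>) * \<phi> (Mn J \<omega>)"
  have "integral\<^sup>L (PiM J (\<lambda>_. Dm mu sg)) ?f = integral\<^sup>L (PiM (insert j ?J') (\<lambda>_. Dm mu sg)) ?f"
    using S(4) by simp
  also have "\<dots> = (\<integral>x. (\<integral>y. ?f (x(j := y)) \<partial>Dm mu sg) \<partial>PiM ?J' (\<lambda>_. Dm mu sg))"
    by (rule Q_insert[OF sg S(1,3)]) (use int S(4) in simp)
  also have "\<dots> = (\<integral>x. P1 mu sg (Mn ?J' x) * \<phi> (Mn ?J' x) \<partial>PiM ?J' (\<lambda>_. Dm mu sg))"
  proof (intro Bochner_Integration.integral_cong refl)
    fix x :: "'a \<Rightarrow> real"
    have "(\<lambda>y. ?f (x(j := y))) = (\<lambda>y. max (y - Mn ?J' x) 0 * \<phi> (Mn ?J' x))"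
    proof
      fix y
      have "Mn J (x(j := y)) = min y (Mn ?J' x)"
        using Mn_insert[OF S(1,2,3), of x y] S(4) by simp
      then show "?f (x(j := y)) = max (y - Mn ?J' x) 0 * \<phi> (Mn ?J' x)"
        by (auto simp: max_def min_def)
    qed
    then show "(\<integral>y. ?f (x(j := y)) \<partial>Dm mu sg) = P1 mu sg (Mn ?J' x) * \<phi> (Mn ?J' x)"
      using P1_eq[OF sg, of mu "Mn ?J' x"] by simp
  qed
  also have "\<dots> = EE (\<lambda>t. P1 mu sg (mu + sg * (t / (?r - 1))) * \<phi> (mu + sg * (t / (?r - 1))))"
    using F1_int[OF sg S(1,2), of "\<lambda>m. P1 mu sg m * \<phi> m" mu] S(5) by (simp add: Mn_def)
  also have "\<dots> = EE (\<lambda>t. sg * (\<phi> (mu + sg * (t / (?r - 1))) * exp (- (t / (?r - 1)))))"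
  proof (intro Ex_cong)
    fix t :: real assume t: "0 \<le> t"
    have "0 \<le> sg * (t / (?r - 1))" using t sg r by simp
    moreover have "(mu + sg * (t / (?r - 1)) - mu) / sg = t / (?r - 1)" using sg by simp
    ultimately show "P1 mu sg (mu + sg * (t / (?r - 1))) * \<phi> (mu + sg * (t / (?r - 1))) =
        sg * (\<phi> (mu + sg * (t / (?r - 1))) * exp (- (t / (?r - 1))))"
      by (simp add: P1_def)
  qed
  also have "\<dots> = sg * (((?r - 1) / ?r) * EE (\<lambda>s. \<phi> (mu + sg * (s / ?r))))"
    unfolding Ex_cmult Ex_exp_scale[OF r, of "\<lambda>u. \<phi> (mu + sg * u)"] ..
  finally show ?thesis by simp
qed

lemma Sn_single: "Sn {j} \<omega> = 0"
  by (simp add: Sn_def Mn_def)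

lemma F2:
  fixes \<phi> :: "real \<Rightarrow> real"
  assumes sg: "0 < sg" and J: "finite J" "J \<noteq> {}" and [measurable]: "\<phi> \<in> borel_measurable borel"
    and \<phi>b: "\<And>x. \<bar>\<phi> x\<bar> \<le> A + B * \<bar>x\<bar>" and A: "0 \<le> A" and B: "0 \<le> B"
  shows "integrable (PiM J (\<lambda>_. Dm mu sg)) (\<lambda>\<omega>. Sn J \<omega> * \<phi> (Mn J \<omega>))" (is ?I)
    and "integral\<^sup>L (PiM J (\<lambda>_. Dm mu sg)) (\<lambda>\<omega>. Sn J \<omega> * \<phi> (Mn J \<omega>))
       = (real (card J) - 1) * sg * integral\<^sup>L (PiM J (\<lambda>_. Dm mu sg)) (\<lambda>\<omega>. \<phi> (Mn J \<omega>))" (is ?E)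
proof -
  let ?Q = "PiM J (\<lambda>_. Dm mu sg)"
  let ?r = "real (card J)"
  have [measurable]: "Mn J \<in> borel_measurable ?Q" by (rule Mn_meas[OF J(1) subset_refl])
  have [measurable]: "Sn J \<in> borel_measurable ?Q" by (rule Sn_meas[OF J(1) subset_refl])
  have phiM: "\<bar>\<phi> (Mn J \<omega>)\<bar> \<le> A + B * Ln J \<omega>" for \<omega>
    using \<phi>b[of "Mn J \<omega>"] Mn_bound[OF J, of \<omega>] B by (meson add_left_mono mult_left_mono order_trans)
  show I: ?I
  proof (rule Q_bound[OF sg J(1)])
    show "(\<lambda>\<omega>. Sn J \<omega> * \<phi> (Mn J \<omega>)) \<in> borel_measurable ?Q" by measurable
    fix \<omega>
    show "\<bar>Sn J \<omega> * \<phi> (Mn J \<omega>)\<bar> \<le> (1 + ?r) * (A + B) * (1 + Ln J \<omega>)\<^sup>2"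
      by (rule mult_bound[OF Ln_nonneg Sn_bound[OF J] phiM]) (use A B in auto)
  qed
  have tint: "integrable ?Q (\<lambda>\<omega>. (\<omega> j - Mn J \<omega>) * \<phi> (Mn J \<omega>))" if j: "j \<in> J" for j
  proof (rule Q_bound[OF sg J(1)])
    have [measurable]: "(\<lambda>\<omega>. \<omega> j) \<in> borel_measurable ?Q" by (rule Dm_comp_meas[OF j])
    show "(\<lambda>\<omega>. (\<omega> j - Mn J \<omega>) * \<phi> (Mn J \<omega>)) \<in> borel_measurable ?Q" by measurable
    fix \<omega>
    have "\<bar>\<omega> j\<bar> \<le> Ln J \<omega>" unfolding Ln_def using J j by (intro member_le_sum) auto
    then have "\<bar>\<omega> j - Mn J \<omega>\<bar> \<le> 2 * Ln J \<omega>" using Mn_bound[OF J, of \<omega>] by simp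
    then show "\<bar>(\<omega> j - Mn J \<omega>) * \<phi> (Mn J \<omega>)\<bar> \<le> 2 * (A + B) * (1 + Ln J \<omega>)\<^sup>2"
      by (rule mult_bound[OF Ln_nonneg _ phiM]) (use A B in auto)
  qed
  have F1: "integral\<^sup>L ?Q (\<lambda>\<omega>. \<phi> (Mn J \<omega>)) = EE (\<lambda>s. \<phi> (mu + sg * (s / ?r)))"
    using F1_int[OF sg J, of \<phi> mu] by (simp add: Mn_def)
  show ?E
  proof (cases "card J = 1")
    case True
    then obtain j where "J = {j}" by (auto simp: card_Suc_eq)
    then show ?thesis by (simp add: Sn_single)
  next
    case False
    have "0 < card J" using J by (simp add: card_gt_0_iff)
    with False have k: "2 \<le> card J" by simp
    have "integral\<^sup>L ?Q (\<lambda>\<omega>. Sn J \<omega> * \<phi> (Mn J \<omega>)) = integral\<^sup>L ?Q (\<lambda>\<omega>. \<Sum>j\<in>J. (\<omega> j - Mn J \<omega>) * \<phi> (Mn J \<omega>))"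
      by (simp add: Sn_def sum_distrib_right)
    also have "\<dots> = (\<Sum>j\<in>J. integral\<^sup>L ?Q (\<lambda>\<omega>. (\<omega> j - Mn J \<omega>) * \<phi> (Mn J \<omega>)))"
      by (rule Bochner_Integration.integral_sum) (rule tint)
    also have "\<dots> = (\<Sum>j\<in>J. sg * ((?r - 1) / ?r) * EE (\<lambda>s. \<phi> (mu + sg * (s / ?r))))"
      by (intro sum.cong refl F2_term[OF sg J(1) k] tint) auto
    also have "\<dots> = (?r - 1) * sg * EE (\<lambda>s. \<phi> (mu + sg * (s / ?r)))"
      using k by simp
    finally show ?thesis using F1 by simp
  qed
qed

lemma P1_bound: "0 < sg \<Longrightarrow> \<bar>P1 mu sg x\<bar> \<le> (\<bar>mu\<bar> + sg) + 1 * \<bar>x\<bar>"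
proof -
  assume sg: "0 < sg"
  show ?thesis
  proof (cases "mu \<le> x")
    case True
    have "exp (- ((x - mu) / sg)) \<le> 1" using True sg by simp
    then have h1: "sg * exp (- ((x - mu) / sg)) \<le> sg" using sg by (simp add: mult_le_cancel_left1)
    have h2: "0 \<le> sg * exp (- ((x - mu) / sg))" using sg by simp
    have "P1 mu sg x = sg * exp (- ((x - mu) / sg))" using True by (simp add: P1_def)
    then have "\<bar>P1 mu sg x\<bar> \<le> sg" using h1 h2 by simp
    then show ?thesis using abs_ge_zero[of mu] abs_ge_zero[of x] by linarith
  next
    case False
    then show ?thesis using sg by (simp add: P1_def)
  qed
qed

lemma F1_integrable:
  fixes \<psi> :: "real \<Rightarrow> real"
  assumes sg: "0 < sg" and J: "finite J" "J \<noteq> {}" and [measurable]: "\<psi> \<in> borel_measurable borel"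
    and b: "\<And>t. 0 \<le> t \<Longrightarrow> \<bar>\<psi> (mu + sg * (t / real (card J)))\<bar> \<le> A + B * t\<^sup>2"
  shows "integrable (PiM J (\<lambda>_. Dm mu sg)) (\<lambda>\<omega>. \<psi> (Mn J \<omega>))"
proof -
  let ?Q = "PiM J (\<lambda>_. Dm mu sg)"
  let ?Y = "\<lambda>\<omega>. Min ((\<lambda>j. (\<omega> j - mu) / sg) ` J)"
  let ?r = "real (card J)"
  have D: "distributed ?Q lborel ?Y (\<lambda>x. ennreal (exponential_density ?r x))"
    by (rule F1_law[OF sg J])
  have Ym: "?Y \<in> measurable ?Q lborel" by (rule distributed_measurable[OF D])
  have phm: "(\<lambda>y. \<psi> (mu + sg * y)) \<in> borel_measurable lborel" by measurable
  have k: "0 < ?r" using J by (simp add: card_gt_0_iff)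
  have "integrable lborel (\<lambda>t. ED t * \<psi> (mu + sg * (t / ?r)))"
    by (rule Ex_integrable[OF _ b]) measurable
  then have "integrable lborel (\<lambda>t. ?r * (ED t * \<psi> (mu + sg * (t / ?r))))" by simp
  also have "(\<lambda>t. ?r * (ED t * \<psi> (mu + sg * (t / ?r)))) = (\<lambda>t. (\<lambda>y. exponential_density ?r y * \<psi> (mu + sg * y)) (0 + (1 / ?r) * t))"
    using k by (auto simp: ED_def exponential_density_def field_simps divide_less_0_iff)
  finally have "integrable lborel (\<lambda>y. exponential_density ?r y * \<psi> (mu + sg * y))"
    using lborel_integrable_real_affine_iff[of "1 / ?r" "\<lambda>y. exponential_density ?r y * \<psi> (mu + sg * y)" 0] k by simp
  then have "integrable (density lborel (\<lambda>x. ennreal (exponential_density ?r x))) (\<lambda>y. \<psi> (mu + sg * y))"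
    using k by (subst integrable_density) (auto intro!: exponential_density_nonneg)
  then have "integrable (distr ?Q lborel ?Y) (\<lambda>y. \<psi> (mu + sg * y))"
    by (simp only: distributed_distr_eq_density[OF D])
  then have "integrable ?Q (\<lambda>\<omega>. \<psi> (mu + sg * ?Y \<omega>))"
    by (simp only: integrable_distr_eq[OF Ym phm])
  then show ?thesis
    using Min_affine[OF sg J] by (simp add: Mn_def)
qed

lemma max_sq_bound: "\<bar>(max (y - m) 0)\<^sup>2\<bar> \<le> 2 * m\<^sup>2 + 2 * (y::real)\<^sup>2"
proof -
  have "(max (y - m) 0)\<^sup>2 \<le> (y - m)\<^sup>2"
    by (cases "y \<le> m") (auto simp: max_def)
  moreover have "(y - m)\<^sup>2 \<le> 2 * m\<^sup>2 + 2 * y\<^sup>2"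
    using sum_power2_ge_zero[of "y + m" 0] by (simp add: power2_eq_square algebra_simps)
  ultimately show ?thesis by simp
qed

lemma max_bound: "\<bar>max (y - m) 0\<bar> \<le> (1 + \<bar>m\<bar>) + 1 * (y::real)\<^sup>2"
proof -
  have "\<bar>y\<bar> \<le> 1 + y\<^sup>2"
  proof -
    have "0 \<le> (\<bar>y\<bar> - 1)\<^sup>2" by simp
    then show ?thesis by (simp add: power2_eq_square algebra_simps)
  qed
  moreover have "\<bar>max (y - m) 0\<bar> \<le> \<bar>y\<bar> + \<bar>m\<bar>" by (auto simp: max_def)
  ultimately show ?thesis by simp
qed

lemma F3_term:
  assumes sg: "0 < sg" and J: "finite J" and k: "2 \<le> card J" and j: "j \<in> J"
    and int: "integrable (PiM J (\<lambda>_. Dm mu sg)) (\<lambda>\<omega>. (\<omega> j - Mn J \<omega>) * Sn J \<omega>)"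
  shows "integral\<^sup>L (PiM J (\<lambda>_. Dm mu sg)) (\<lambda>\<omega>. (\<omega> j - Mn J \<omega>) * Sn J \<omega>)
       = sg\<^sup>2 * (real (card J) - 1)"
proof -
  let ?J' = "J - {j}"
  let ?Q' = "PiM ?J' (\<lambda>_. Dm mu sg)"
  let ?r = "real (card J)"
  note S = card_ge2_split[OF J k j]
  have r: "1 < ?r" using k by simp
  have [measurable]: "Mn ?J' \<in> borel_measurable ?Q'" by (rule Mn_meas[OF S(1) subset_refl])
  have [measurable]: "Sn ?J' \<in> borel_measurable ?Q'" by (rule Sn_meas[OF S(1) subset_refl])
  let ?f = "\<lambda>\<omega>. (\<omega> j - Mn J \<omega>) * Sn J \<omega>"
  have "integral\<^sup>L (PiM J (\<lambda>_. Dm mu sg)) ?f = integral\<^sup>L (PiM (insert j ?J') (\<lambda>_. Dm mu sg)) ?f"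
    using S(4) by simp
  also have "\<dots> = (\<integral>x. (\<integral>y. ?f (x(j := y)) \<partial>Dm mu sg) \<partial>?Q')"
    by (rule Q_insert[OF sg S(1,3)]) (use int S(4) in simp)
  also have "\<dots> = (\<integral>x. P2 mu sg (Mn ?J' x) + Sn ?J' x * P1 mu sg (Mn ?J' x) \<partial>?Q')"
  proof (intro Bochner_Integration.integral_cong refl)
    fix x :: "'a \<Rightarrow> real"
    let ?m = "Mn ?J' x"
    have "(\<lambda>y. ?f (x(j := y))) = (\<lambda>y. (max (y - ?m) 0)\<^sup>2 + max (y - ?m) 0 * Sn ?J' x)"
    proof
      fix y
      have M: "Mn J (x(j := y)) = min y ?m"
        using Mn_insert[OF S(1,2,3), of x y] S(4) by simp
      have SS: "Sn J (x(j := y)) = (y - min y ?m) + (\<Sum>l\<in>?J'. (x l - min y ?m))"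
        using Sn_insert[OF S(1,2,3), of x y] S(4) by simp
      show "?f (x(j := y)) = (max (y - ?m) 0)\<^sup>2 + max (y - ?m) 0 * Sn ?J' x"
      proof (cases "y \<le> ?m")
        case True then show ?thesis by (simp add: M max_def min_def)
      next
        case False
        then have e: "Sn J (x(j := y)) = (y - ?m) + Sn ?J' x" unfolding SS by (simp add: Sn_def min_def)
        have "?f (x(j := y)) = (y - min y ?m) * Sn J (x(j := y))" unfolding M by simp
        also have "\<dots> = (y - ?m) * ((y - ?m) + Sn ?J' x)" unfolding e using False by (simp add: min_def)
        finally show ?thesis using False by (simp add: max_def power2_eq_square algebra_simps)
      qed
    qed
    moreover have "(\<integral>y. (max (y - ?m) 0)\<^sup>2 + max (y - ?m) 0 * Sn ?J' x \<partial>Dm mu sg)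
        = (\<integral>y. (max (y - ?m) 0)\<^sup>2 \<partial>Dm mu sg) + (\<integral>y. max (y - ?m) 0 \<partial>Dm mu sg) * Sn ?J' x"
    proof (subst Bochner_Integration.integral_add)
      show "integrable (Dm mu sg) (\<lambda>y. (max (y - ?m) 0)\<^sup>2)"
        by (rule Dm_integrable_poly[OF sg _ max_sq_bound]) auto
      have "integrable (Dm mu sg) (\<lambda>y. max (y - ?m) 0)"
        by (rule Dm_integrable_poly[OF sg _ max_bound]) auto
      then show "integrable (Dm mu sg) (\<lambda>y. max (y - ?m) 0 * Sn ?J' x)" by simp
    qed simp
    ultimately show "(\<integral>y. ?f (x(j := y)) \<partial>Dm mu sg) = P2 mu sg ?m + Sn ?J' x * P1 mu sg ?m"
      using P1_eq[OF sg, of mu ?m] P2_eq[OF sg, of mu ?m] by simp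
  qed
  also have "\<dots> = (\<integral>x. P2 mu sg (Mn ?J' x) \<partial>?Q') + (\<integral>x. Sn ?J' x * P1 mu sg (Mn ?J' x) \<partial>?Q')"
  proof (rule Bochner_Integration.integral_add)
    show "integrable ?Q' (\<lambda>x. P2 mu sg (Mn ?J' x))"
    proof (rule F1_integrable[OF sg S(1,2), where A="2 * sg\<^sup>2" and B=0])
      fix t :: real assume t: "0 \<le> t"
      have "0 \<le> sg * (t / real (card ?J'))" using t sg by simp
      then have "P2 mu sg (mu + sg * (t / real (card ?J'))) = 2 * sg\<^sup>2 * exp (- (t / real (card ?J')))"
        using sg by (simp add: P2_def)
      moreover have "exp (- (t / real (card ?J'))) \<le> 1" using t by simp
      then have "2 * sg\<^sup>2 * exp (- (t / real (card ?J'))) \<le> 2 * sg\<^sup>2"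
        using sg by (simp add: mult_le_cancel_left1)
      moreover have "0 \<le> 2 * sg\<^sup>2 * exp (- (t / real (card ?J')))" by simp
      ultimately show "\<bar>P2 mu sg (mu + sg * (t / real (card ?J')))\<bar> \<le> 2 * sg\<^sup>2 + 0 * t\<^sup>2"
        by simp
    qed simp
    show "integrable ?Q' (\<lambda>x. Sn ?J' x * P1 mu sg (Mn ?J' x))"
      by (rule F2(1)[OF sg S(1,2) _ P1_bound[OF sg]]) (use sg in auto)
  qed
  also have "(\<integral>x. Sn ?J' x * P1 mu sg (Mn ?J' x) \<partial>?Q') = (?r - 2) * sg * (\<integral>x. P1 mu sg (Mn ?J' x) \<partial>?Q')"
    using F2(2)[OF sg S(1,2) _ P1_bound[OF sg], of mu] S(5) sg by simp
  also have "(\<integral>x. P1 mu sg (Mn ?J' x) \<partial>?Q') = EE (\<lambda>t. P1 mu sg (mu + sg * (t / (?r - 1))))"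
    using F1_int[OF sg S(1,2), of "P1 mu sg" mu] S(5) by (simp add: Mn_def)
  also have "\<dots> = EE (\<lambda>t. sg * exp (- (t / (?r - 1))))"
  proof (intro Ex_cong)
    fix t :: real assume t: "0 \<le> t"
    have "0 \<le> sg * (t / (?r - 1))" using t sg r by simp
    then show "P1 mu sg (mu + sg * (t / (?r - 1))) = sg * exp (- (t / (?r - 1)))"
      using sg by (simp add: P1_def)
  qed
  also have "(\<integral>x. P2 mu sg (Mn ?J' x) \<partial>?Q') = EE (\<lambda>t. P2 mu sg (mu + sg * (t / (?r - 1))))"
    using F1_int[OF sg S(1,2), of "P2 mu sg" mu] S(5) by (simp add: Mn_def)
  also have "\<dots> = EE (\<lambda>t. 2 * sg\<^sup>2 * exp (- (t / (?r - 1))))"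
  proof (intro Ex_cong)
    fix t :: real assume t: "0 \<le> t"
    have "0 \<le> sg * (t / (?r - 1))" using t sg r by simp
    then show "P2 mu sg (mu + sg * (t / (?r - 1))) = 2 * sg\<^sup>2 * exp (- (t / (?r - 1)))"
      using sg by (simp add: P2_def)
  qed
  finally have "integral\<^sup>L (PiM J (\<lambda>_. Dm mu sg)) ?f
      = 2 * sg\<^sup>2 * ((?r - 1) / ?r) + (?r - 2) * sg * (sg * ((?r - 1) / ?r))"
    by (simp only: Ex_cmult Ex_exp_only[OF r])
  also have "\<dots> = sg\<^sup>2 * (?r - 1)"
    using r by (simp add: field_simps power2_eq_square)
  finally show ?thesis .
qed

lemma F3:
  assumes sg: "0 < sg" and J: "finite J" "J \<noteq> {}"
  shows "integrable (PiM J (\<lambda>_. Dm mu sg)) (\<lambda>\<omega>. (Sn J \<omega>)\<^sup>2)" (is ?I)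
    and "integral\<^sup>L (PiM J (\<lambda>_. Dm mu sg)) (\<lambda>\<omega>. (Sn J \<omega>)\<^sup>2)
       = real (card J) * (real (card J) - 1) * sg\<^sup>2" (is ?E)
proof -
  let ?Q = "PiM J (\<lambda>_. Dm mu sg)"
  let ?r = "real (card J)"
  have [measurable]: "Mn J \<in> borel_measurable ?Q" by (rule Mn_meas[OF J(1) subset_refl])
  have [measurable]: "Sn J \<in> borel_measurable ?Q" by (rule Sn_meas[OF J(1) subset_refl])
  have SnB: "\<bar>Sn J \<omega>\<bar> \<le> 0 + (1 + ?r) * Ln J \<omega>" for \<omega> using Sn_bound[OF J, of \<omega>] by simp
  show ?I
  proof (rule Q_bound[OF sg J(1)])
    show "(\<lambda>\<omega>. (Sn J \<omega>)\<^sup>2) \<in> borel_measurable ?Q" by measurable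
    fix \<omega>
    have "\<bar>Sn J \<omega> * Sn J \<omega>\<bar> \<le> (1 + ?r) * (0 + (1 + ?r)) * (1 + Ln J \<omega>)\<^sup>2"
      by (rule mult_bound[OF Ln_nonneg _ SnB]) (use Sn_bound[OF J, of \<omega>] in auto)
    then show "\<bar>(Sn J \<omega>)\<^sup>2\<bar> \<le> (1 + ?r) * (0 + (1 + ?r)) * (1 + Ln J \<omega>)\<^sup>2"
      by (simp add: power2_eq_square)
  qed
  have tint: "integrable ?Q (\<lambda>\<omega>. (\<omega> j - Mn J \<omega>) * Sn J \<omega>)" if j: "j \<in> J" for j
  proof (rule Q_bound[OF sg J(1)])
    have [measurable]: "(\<lambda>\<omega>. \<omega> j) \<in> borel_measurable ?Q" by (rule Dm_comp_meas[OF j])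
    show "(\<lambda>\<omega>. (\<omega> j - Mn J \<omega>) * Sn J \<omega>) \<in> borel_measurable ?Q" by measurable
    fix \<omega>
    have "\<bar>\<omega> j\<bar> \<le> Ln J \<omega>" unfolding Ln_def using J j by (intro member_le_sum) auto
    then have "\<bar>\<omega> j - Mn J \<omega>\<bar> \<le> 2 * Ln J \<omega>" using Mn_bound[OF J, of \<omega>] by simp
    then show "\<bar>(\<omega> j - Mn J \<omega>) * Sn J \<omega>\<bar> \<le> 2 * (0 + (1 + ?r)) * (1 + Ln J \<omega>)\<^sup>2"
      by (rule mult_bound[OF Ln_nonneg _ SnB]) auto
  qed
  show ?E
  proof (cases "card J = 1")
    case True
    then obtain j where "J = {j}" by (auto simp: card_Suc_eq)
    then show ?thesis by (simp add: Sn_single)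
  next
    case False
    have "0 < card J" using J by (simp add: card_gt_0_iff)
    with False have k: "2 \<le> card J" by simp
    have "integral\<^sup>L ?Q (\<lambda>\<omega>. (Sn J \<omega>)\<^sup>2) = integral\<^sup>L ?Q (\<lambda>\<omega>. \<Sum>j\<in>J. (\<omega> j - Mn J \<omega>) * Sn J \<omega>)"
    proof (intro Bochner_Integration.integral_cong refl)
      fix \<omega> :: "'a \<Rightarrow> real"
      show "(Sn J \<omega>)\<^sup>2 = (\<Sum>j\<in>J. (\<omega> j - Mn J \<omega>) * Sn J \<omega>)"
        by (simp add: power2_eq_square sum_distrib_right[symmetric] Sn_def[of J \<omega>])
    qed
    also have "\<dots> = (\<Sum>j\<in>J. integral\<^sup>L ?Q (\<lambda>\<omega>. (\<omega> j - Mn J \<omega>) * Sn J \<omega>))"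
      by (rule Bochner_Integration.integral_sum) (rule tint)
    also have "\<dots> = (\<Sum>j\<in>J. sg\<^sup>2 * (?r - 1))"
      by (intro sum.cong refl F3_term[OF sg J(1) k] tint) auto
    finally show ?thesis by (simp add: algebra_simps)
  qed
qed

lemma lin_to_sq: "0 \<le> t \<Longrightarrow> 0 \<le> B \<Longrightarrow> 0 \<le> C \<Longrightarrow> A + B * t + C * t\<^sup>2 \<le> (A + B) + (B + C) * (t::real)\<^sup>2"
proof -
  assume t: "0 \<le> t" and B: "0 \<le> B" and C: "0 \<le> C"
  have "0 \<le> (t - 1)\<^sup>2" by simp
  then have "t \<le> 1 + t\<^sup>2" by (simp add: power2_eq_square algebra_simps) (use t in linarith)
  then have "B * t \<le> B * (1 + t\<^sup>2)" using B by (rule mult_left_mono)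
  then show ?thesis by (simp add: algebra_simps)
qed

lemma F1_abs: "\<bar>F1 \<delta> s\<bar> \<le> (2 + \<bar>\<delta>\<bar>) + \<bar>s\<bar>"
proof (cases "s - \<delta> \<le> 0")
  case True then show ?thesis by (simp add: F1_def)
next
  case False
  have e: "exp (- (s - \<delta>)) \<le> 1" "0 \<le> exp (- (s - \<delta>))" using False by auto
  have "\<bar>exp (- (s - \<delta>)) * (\<delta> - 1)\<bar> \<le> 1 * \<bar>\<delta> - 1\<bar>"
    unfolding abs_mult using e by (intro mult_right_mono) auto
  then have "\<bar>F1 \<delta> s\<bar> \<le> 1 + \<bar>\<delta> - 1\<bar>" using False by (simp add: F1_def)
  moreover have "\<bar>\<delta> - 1\<bar> \<le> \<bar>\<delta>\<bar> + 1" by simp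
  moreover have "0 \<le> \<bar>s\<bar>" by simp
  ultimately show ?thesis by linarith
qed

lemma abs5: "\<bar>a + b + c + d + e\<bar> \<le> \<bar>a\<bar> + \<bar>b\<bar> + \<bar>c\<bar> + \<bar>d\<bar> + \<bar>e::real\<bar>"
  by (smt (verit))

lemma F2_abs:
  assumes s: "0 \<le> s"
  shows "\<bar>F2 \<delta> s\<bar> \<le> (4 + \<delta>\<^sup>2 + 2 * \<bar>\<delta>\<bar>) + (2 + 2 * \<bar>\<delta>\<bar>) * s + s\<^sup>2"
proof (cases "s - \<delta> \<le> 0")
  case True
  have "0 \<le> (4 + \<delta>\<^sup>2 + 2 * \<bar>\<delta>\<bar>) + (2 + 2 * \<bar>\<delta>\<bar>) * s" using s by simp
  then show ?thesis using True by (simp add: F2_def)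
next
  case False
  let ?X = "s\<^sup>2 - (s - \<delta>)\<^sup>2 - 2 * (s - \<delta>) - 2"
  have X: "?X = 2 * s * \<delta> - \<delta>\<^sup>2 - 2 * s + 2 * \<delta> - 2" by (simp add: power2_eq_square algebra_simps)
  have X2: "?X = 2 * s * \<delta> + (- \<delta>\<^sup>2) + (- 2 * s) + 2 * \<delta> + (- 2)" unfolding X by simp
  have "\<bar>?X\<bar> \<le> \<bar>2 * s * \<delta>\<bar> + \<bar>- \<delta>\<^sup>2\<bar> + \<bar>- 2 * s\<bar> + \<bar>2 * \<delta>\<bar> + \<bar>- 2\<bar>"
    unfolding X2 by (rule abs5)
  also have "\<dots> = 2 * s * \<bar>\<delta>\<bar> + \<delta>\<^sup>2 + 2 * s + 2 * \<bar>\<delta>\<bar> + 2"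
    using s by (simp add: abs_mult)
  finally have XB: "\<bar>?X\<bar> \<le> 2 * s * \<bar>\<delta>\<bar> + \<delta>\<^sup>2 + 2 * s + 2 * \<bar>\<delta>\<bar> + 2" .
  have e: "exp (- (s - \<delta>)) \<le> 1" "0 \<le> exp (- (s - \<delta>))" using False by auto
  have "\<bar>exp (- (s - \<delta>)) * ?X\<bar> = exp (- (s - \<delta>)) * \<bar>?X\<bar>" by (simp add: abs_mult)
  also have "\<dots> \<le> 1 * \<bar>?X\<bar>" using e by (intro mult_right_mono) auto
  finally have eX: "\<bar>exp (- (s - \<delta>)) * ?X\<bar> \<le> 2 * s * \<bar>\<delta>\<bar> + \<delta>\<^sup>2 + 2 * s + 2 * \<bar>\<delta>\<bar> + 2"
    using XB by simp
  have "F2 \<delta> s = 2 + exp (- (s - \<delta>)) * ?X" using False by (simp add: F2_def)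
  then have "\<bar>F2 \<delta> s\<bar> \<le> \<bar>2\<bar> + \<bar>exp (- (s - \<delta>)) * ?X\<bar>" by (simp only: abs_triangle_ineq)
  with eX have "\<bar>F2 \<delta> s\<bar> \<le> 2 + (2 * s * \<bar>\<delta>\<bar> + \<delta>\<^sup>2 + 2 * s + 2 * \<bar>\<delta>\<bar> + 2)" by simp
  then have h: "\<bar>F2 \<delta> s\<bar> \<le> 4 + (s * 2 + (\<delta>\<^sup>2 + (\<bar>\<delta>\<bar> * 2 + s * (\<bar>\<delta>\<bar> * 2))))" by (simp add: algebra_simps)
  have g: "(4 + \<delta>\<^sup>2 + 2 * \<bar>\<delta>\<bar>) + (2 + 2 * \<bar>\<delta>\<bar>) * s + s\<^sup>2 = 4 + (s * 2 + (\<delta>\<^sup>2 + (\<bar>\<delta>\<bar> * 2 + s * (\<bar>\<delta>\<bar> * 2)))) + s\<^sup>2"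
    by (simp add: algebra_simps)
  show ?thesis using h g zero_le_power2[of s] by linarith
qed

definition Tf :: "real \<Rightarrow> real \<Rightarrow> real \<Rightarrow> real \<Rightarrow> real" where
  "Tf mu1 mu2 x y = min x y - (if x \<le> y then mu1 else mu2)"

definition dl :: "nat \<Rightarrow> real \<Rightarrow> real \<Rightarrow> real \<Rightarrow> real" where
  "dl n mu1 mu2 sg = real n * (mu2 - mu1) / sg"

definition Hin :: "nat \<Rightarrow> real \<Rightarrow> real \<Rightarrow> real \<Rightarrow> real \<Rightarrow> real \<Rightarrow> real \<Rightarrow> real" where
  "Hin n mu1 mu2 sg c a s =
     (1 / sg\<^sup>2) * (((sg / real n)\<^sup>2 * F2 (dl n mu1 mu2 sg) (real n * (a - mu1) / sg)
        - 2 * c * s * (sg / real n) * F1 (dl n mu1 mu2 sg) (real n * (a - mu1) / sg) + c\<^sup>2 * s\<^sup>2)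
      + (real n - 1) * sg * (- 2 * c * ((sg / real n) * F1 (dl n mu1 mu2 sg) (real n * (a - mu1) / sg) - c * s))
      + c\<^sup>2 * (real n * (real n - 1) * sg\<^sup>2))"

definition RF :: "nat \<Rightarrow> real \<Rightarrow> real \<Rightarrow> real" where
  "RF n c m = G2 m / (real n)\<^sup>2 - 4 * c * (real n - 1) * G1 m / real n + 2 * c\<^sup>2 * (real n - 1) * (2 * real n - 1)"

lemma Tf_meas[measurable]: "Tf mu1 mu2 a \<in> borel_measurable borel"
  unfolding Tf_def by measurable

lemma Tf_tk:
  assumes sg: "0 < sg" and n: "1 \<le> n"
  shows "Tf mu1 mu2 a (mu2 + sg * (t / real n)) = (sg / real n) * tk (dl n mu1 mu2 sg) (real n * (a - mu1) / sg) t"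
proof -
  define b where "b = sg / real n"
  define s1 where "s1 = real n * (a - mu1) / sg"
  define d where "d = dl n mu1 mu2 sg"
  have b: "0 < b" using sg n by (simp add: b_def)
  have a: "a = mu1 + b * s1" using sg n by (simp add: b_def s1_def field_simps)
  have m2: "mu2 = mu1 + b * d" using sg n by (simp add: b_def d_def dl_def field_simps)
  have nz: "real n \<noteq> 0" using n by simp
  have y: "mu2 + sg * (t / real n) = mu1 + b * (d + t)" using m2 nz by (simp add: b_def field_simps)
  have iff: "a \<le> mu2 + sg * (t / real n) \<longleftrightarrow> s1 \<le> t + d"
  proof -
    have "a \<le> mu2 + sg * (t / real n) \<longleftrightarrow> mu1 + b * s1 \<le> mu1 + b * (d + t)" using a y by simp
    also have "\<dots> \<longleftrightarrow> b * s1 \<le> b * (t + d)" by (simp add: algebra_simps)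
    also have "\<dots> \<longleftrightarrow> s1 \<le> t + d" using b by (rule mult_le_cancel_left_pos)
    finally show ?thesis .
  qed
  have "Tf mu1 mu2 a (mu2 + sg * (t / real n)) = b * tk d s1 t"
  proof (cases "s1 \<le> t + d")
    case True
    then have "a \<le> mu2 + sg * (t / real n)" using iff by simp
    then have "Tf mu1 mu2 a (mu2 + sg * (t / real n)) = a - mu1" by (simp add: Tf_def min_def)
    then show ?thesis using True a by (simp add: tk_def)
  next
    case False
    then have "\<not> a \<le> mu2 + sg * (t / real n)" using iff by simp
    then have "Tf mu1 mu2 a (mu2 + sg * (t / real n)) = mu2 + sg * (t / real n) - mu2" by (simp add: Tf_def min_def)
    then show ?thesis using False by (simp add: tk_def b_def)
  qed
  then show ?thesis by (simp add: b_def s1_def d_def)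
qed

lemma tk_abs: "0 \<le> t \<Longrightarrow> \<bar>tk d s t\<bar> \<le> \<bar>s\<bar> + t"
  by (auto simp: tk_def)

lemma Tf_abs: "\<bar>Tf mu1 mu2 a m\<bar> \<le> (\<bar>a - mu1\<bar> + \<bar>mu2\<bar>) + 1 * \<bar>m\<bar>"
  by (auto simp: Tf_def min_def)

lemma sq_sum_le: "(x + y)\<^sup>2 \<le> 2 * x\<^sup>2 + 2 * (y::real)\<^sup>2"
  using sum_power2_ge_zero[of "x - y" 0] by (simp add: power2_eq_square algebra_simps)

lemma inner_block:
  assumes sg: "0 < sg" and n: "1 \<le> n" and B: "finite B" "card B = n"
  shows "integral\<^sup>L (PiM B (\<lambda>_. Dm mu2 sg)) (\<lambda>y. ((Tf mu1 mu2 a (Mn B y) - c * (s + Sn B y)) / sg)\<^sup>2)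
       = Hin n mu1 mu2 sg c a s"
proof -
  let ?Q = "PiM B (\<lambda>_. Dm mu2 sg)"
  let ?b = "sg / real n"
  let ?s1 = "real n * (a - mu1) / sg"
  let ?d = "dl n mu1 mu2 sg"
  let ?\<phi> = "\<lambda>m. Tf mu1 mu2 a m - c * s"
  have Bne: "B \<noteq> {}" using B n by auto
  have b: "0 < ?b" using sg n by simp
  have [measurable]: "Mn B \<in> borel_measurable ?Q" by (rule Mn_meas[OF B(1) subset_refl])
  have [measurable]: "Sn B \<in> borel_measurable ?Q" by (rule Sn_meas[OF B(1) subset_refl])
  have phiy: "?\<phi> (mu2 + sg * (t / real n)) = ?b * tk ?d ?s1 t - c * s" for t
    using Tf_tk[OF sg n] by simp
  have eq: "((Tf mu1 mu2 a (Mn B y) - c * (s + Sn B y)) / sg)\<^sup>2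
      = (1 / sg\<^sup>2) * ((?\<phi> (Mn B y))\<^sup>2 + Sn B y * (- 2 * c * ?\<phi> (Mn B y)) + c\<^sup>2 * (Sn B y)\<^sup>2)" for y
    using sg by (simp add: power2_eq_square field_simps)
  have i1: "integrable ?Q (\<lambda>y. (?\<phi> (Mn B y))\<^sup>2)"
  proof (rule F1_integrable[OF sg B(1) Bne, where A="2 * (?b * \<bar>?s1\<bar> + \<bar>c * s\<bar>)\<^sup>2" and B="2 * ?b\<^sup>2"])
    show "(\<lambda>m. (?\<phi> m)\<^sup>2) \<in> borel_measurable borel" by measurable
    fix t :: real assume t: "0 \<le> t"
    have "\<bar>?\<phi> (mu2 + sg * (t / real (card B)))\<bar> \<le> (?b * \<bar>?s1\<bar> + \<bar>c * s\<bar>) + ?b * t"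
    proof -
      have "\<bar>?b * tk ?d ?s1 t\<bar> = ?b * \<bar>tk ?d ?s1 t\<bar>" by (simp only: abs_mult abs_of_pos[OF b])
      also have "\<dots> \<le> ?b * (\<bar>?s1\<bar> + t)" by (rule mult_left_mono[OF tk_abs[OF t]]) (use b in simp)
      finally have h1: "\<bar>?b * tk ?d ?s1 t\<bar> \<le> ?b * \<bar>?s1\<bar> + ?b * t" by (simp only: distrib_left)
      have h2: "\<bar>?b * tk ?d ?s1 t - c * s\<bar> \<le> \<bar>?b * tk ?d ?s1 t\<bar> + \<bar>c * s\<bar>" by (rule abs_triangle_ineq4)
      have "?\<phi> (mu2 + sg * (t / real (card B))) = ?b * tk ?d ?s1 t - c * s" using phiy[of t] B(2) by simp
      then have "\<bar>?\<phi> (mu2 + sg * (t / real (card B)))\<bar> = \<bar>?b * tk ?d ?s1 t - c * s\<bar>" by simp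
      then show ?thesis using h1 h2 by linarith
    qed
    then have "(?\<phi> (mu2 + sg * (t / real (card B))))\<^sup>2 \<le> ((?b * \<bar>?s1\<bar> + \<bar>c * s\<bar>) + ?b * t)\<^sup>2"
      by (metis abs_ge_zero order_trans power2_abs power_mono)
    also have "\<dots> \<le> 2 * (?b * \<bar>?s1\<bar> + \<bar>c * s\<bar>)\<^sup>2 + 2 * (?b * t)\<^sup>2" by (rule sq_sum_le)
    also have "\<dots> = 2 * (?b * \<bar>?s1\<bar> + \<bar>c * s\<bar>)\<^sup>2 + 2 * ?b\<^sup>2 * t\<^sup>2" by (simp only: power_mult_distrib mult.assoc)
    finally show "\<bar>(?\<phi> (mu2 + sg * (t / real (card B))))\<^sup>2\<bar> \<le> 2 * (?b * \<bar>?s1\<bar> + \<bar>c * s\<bar>)\<^sup>2 + 2 * ?b\<^sup>2 * t\<^sup>2"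
      by (simp only: power2_abs abs_power2)
  qed
  have phib: "\<bar>- 2 * c * ?\<phi> m\<bar> \<le> 2 * \<bar>c\<bar> * ((\<bar>a - mu1\<bar> + \<bar>mu2\<bar>) + \<bar>c * s\<bar>) + 2 * \<bar>c\<bar> * \<bar>m\<bar>" for m
  proof -
    have "\<bar>?\<phi> m\<bar> \<le> ((\<bar>a - mu1\<bar> + \<bar>mu2\<bar>) + \<bar>c * s\<bar>) + \<bar>m\<bar>"
      using Tf_abs[of mu1 mu2 a m] abs_triangle_ineq4[of "Tf mu1 mu2 a m" "c * s"] by linarith
    then have "2 * \<bar>c\<bar> * \<bar>?\<phi> m\<bar> \<le> 2 * \<bar>c\<bar> * (((\<bar>a - mu1\<bar> + \<bar>mu2\<bar>) + \<bar>c * s\<bar>) + \<bar>m\<bar>)"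
      by (intro mult_left_mono) auto
    moreover have "\<bar>- 2 * c * ?\<phi> m\<bar> = 2 * \<bar>c\<bar> * \<bar>?\<phi> m\<bar>" by (simp add: abs_mult)
    moreover have "2 * \<bar>c\<bar> * (((\<bar>a - mu1\<bar> + \<bar>mu2\<bar>) + \<bar>c * s\<bar>) + \<bar>m\<bar>) = 2 * \<bar>c\<bar> * ((\<bar>a - mu1\<bar> + \<bar>mu2\<bar>) + \<bar>c * s\<bar>) + 2 * \<bar>c\<bar> * \<bar>m\<bar>"
      by (simp only: distrib_left)
    ultimately show ?thesis by linarith
  qed
  have i2: "integrable ?Q (\<lambda>y. Sn B y * (- 2 * c * ?\<phi> (Mn B y)))"
    by (rule F2(1)[OF sg B(1) Bne _ phib]) auto
  have i3: "integrable ?Q (\<lambda>y. c\<^sup>2 * (Sn B y)\<^sup>2)"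
    using F3(1)[OF sg B(1) Bne, of mu2] by simp
  have "integral\<^sup>L ?Q (\<lambda>y. ((Tf mu1 mu2 a (Mn B y) - c * (s + Sn B y)) / sg)\<^sup>2)
      = (1 / sg\<^sup>2) * (integral\<^sup>L ?Q (\<lambda>y. (?\<phi> (Mn B y))\<^sup>2) + integral\<^sup>L ?Q (\<lambda>y. Sn B y * (- 2 * c * ?\<phi> (Mn B y)))
          + integral\<^sup>L ?Q (\<lambda>y. c\<^sup>2 * (Sn B y)\<^sup>2))"
    unfolding eq using i1 i2 i3 by simp
  also have "integral\<^sup>L ?Q (\<lambda>y. (?\<phi> (Mn B y))\<^sup>2) = EE (\<lambda>t. (?b * tk ?d ?s1 t - c * s)\<^sup>2)"
    using F1_int[OF sg B(1) Bne, of "\<lambda>m. (?\<phi> m)\<^sup>2" mu2] B(2) phiy by (simp add: Mn_def)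
  also have "\<dots> = ?b\<^sup>2 * F2 ?d ?s1 - 2 * c * s * ?b * F1 ?d ?s1 + c\<^sup>2 * s\<^sup>2"
  proof (rule hbE_Ex)
    have "hbE (\<lambda>t. ?b\<^sup>2 * (tk ?d ?s1 t)\<^sup>2 + ((- 2 * c * s * ?b) * tk ?d ?s1 t + c\<^sup>2 * s\<^sup>2))
        (?b\<^sup>2 * F2 ?d ?s1 + ((- 2 * c * s * ?b) * F1 ?d ?s1 + c\<^sup>2 * s\<^sup>2))"
      by (intro hbE_add hbE_cmult inner1 inner2 hbE_const)
    then show "hbE (\<lambda>t. (?b * tk ?d ?s1 t - c * s)\<^sup>2) (?b\<^sup>2 * F2 ?d ?s1 - 2 * c * s * ?b * F1 ?d ?s1 + c\<^sup>2 * s\<^sup>2)"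
      by (rule hbE_cong) (auto simp: power2_eq_square algebra_simps)
  qed
  also have "integral\<^sup>L ?Q (\<lambda>y. Sn B y * (- 2 * c * ?\<phi> (Mn B y)))
      = (real n - 1) * sg * integral\<^sup>L ?Q (\<lambda>y. - 2 * c * ?\<phi> (Mn B y))"
    using F2(2)[OF sg B(1) Bne _ phib, of mu2] B(2) by simp
  also have "integral\<^sup>L ?Q (\<lambda>y. - 2 * c * ?\<phi> (Mn B y)) = EE (\<lambda>t. - 2 * c * (?b * tk ?d ?s1 t - c * s))"
    using F1_int[OF sg B(1) Bne, of "\<lambda>m. - 2 * c * ?\<phi> m" mu2] B(2) phiy by (simp add: Mn_def)
  also have "\<dots> = - 2 * c * (?b * F1 ?d ?s1 - c * s)"
  proof (rule hbE_Ex)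
    have "hbE (\<lambda>t. (- 2 * c * ?b) * tk ?d ?s1 t + 2 * c\<^sup>2 * s) ((- 2 * c * ?b) * F1 ?d ?s1 + 2 * c\<^sup>2 * s)"
      by (intro hbE_add hbE_cmult inner1 hbE_const)
    then show "hbE (\<lambda>t. - 2 * c * (?b * tk ?d ?s1 t - c * s)) (- 2 * c * (?b * F1 ?d ?s1 - c * s))"
      by (rule hbE_cong) (auto simp: power2_eq_square algebra_simps)
  qed
  also have "integral\<^sup>L ?Q (\<lambda>y. c\<^sup>2 * (Sn B y)\<^sup>2) = c\<^sup>2 * (real n * (real n - 1) * sg\<^sup>2)"
    using F3(2)[OF sg B(1) Bne, of mu2] B(2) by simp
  finally show ?thesis unfolding Hin_def by simp
qed

lemma outer_block:
  assumes sg: "0 < sg" and n: "1 \<le> n" and B: "finite B" "card B = n"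
  shows "integral\<^sup>L (PiM B (\<lambda>_. Dm mu1 sg)) (\<lambda>x. Hin n mu1 mu2 sg c (Mn B x) (Sn B x))
       = RF n c \<bar>dl n mu1 mu2 sg\<bar>"
proof -
  let ?Q = "PiM B (\<lambda>_. Dm mu1 sg)"
  define b where "b = sg / real n"
  define d where "d = dl n mu1 mu2 sg"
  define s1 where "s1 = (\<lambda>a. real n * (a - mu1) / sg)"
  define \<psi> where "\<psi> = (\<lambda>a. b\<^sup>2 * F2 d (s1 a) - 2 * c * (real n - 1) * sg * b * F1 d (s1 a))"
  define \<phi> where "\<phi> = (\<lambda>a. - 2 * c * b * F1 d (s1 a) + 2 * c\<^sup>2 * (real n - 1) * sg)"
  define K where "K = c\<^sup>2 * (real n * (real n - 1) * sg\<^sup>2)"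
  have Bne: "B \<noteq> {}" using B n by auto
  have b: "0 < b" using sg n by (simp add: b_def)
  have nz: "real n \<noteq> 0" using n by simp
  have [measurable]: "Mn B \<in> borel_measurable ?Q" by (rule Mn_meas[OF B(1) subset_refl])
  have [measurable]: "Sn B \<in> borel_measurable ?Q" by (rule Sn_meas[OF B(1) subset_refl])
  have F1m[measurable]: "F1 d \<in> borel_measurable borel" unfolding F1_def by measurable
  have F2m[measurable]: "F2 d \<in> borel_measurable borel" unfolding F2_def by measurable
  have psim[measurable]: "\<psi> \<in> borel_measurable borel" unfolding \<psi>_def s1_def by measurable
  have phim[measurable]: "\<phi> \<in> borel_measurable borel" unfolding \<phi>_def s1_def by measurable
  have s1t: "s1 (mu1 + sg * (t / real n)) = t" for t using sg nz by (simp add: s1_def)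
  have eq: "Hin n mu1 mu2 sg c a s = (1 / sg\<^sup>2) * (\<psi> a + s * \<phi> a + c\<^sup>2 * s\<^sup>2 + K)" for a s
  proof -
    have e1: "sg / real n = b" by (simp add: b_def)
    have e2: "real n * (a - mu1) / sg = s1 a" by (simp add: s1_def)
    have e3: "dl n mu1 mu2 sg = d" by (simp add: d_def)
    show ?thesis
      unfolding Hin_def e1 e2 e3 \<psi>_def \<phi>_def K_def by (simp add: algebra_simps power2_eq_square)
  qed
  have i1: "integrable ?Q (\<lambda>x. \<psi> (Mn B x))"
  proof -
    let ?k = "2 * \<bar>c\<bar> * (real n - 1) * sg * b"
    let ?a0 = "4 + d\<^sup>2 + 2 * \<bar>d\<bar>"
    let ?a1 = "2 + 2 * \<bar>d\<bar>"
    have k: "0 \<le> ?k" using sg b n by simp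
    show ?thesis
    proof (rule F1_integrable[OF sg B(1) Bne \<open>\<psi> \<in> borel_measurable borel\<close>,
          where A="(b\<^sup>2 * ?a0 + ?k * (2 + \<bar>d\<bar>)) + (b\<^sup>2 * ?a1 + ?k)" and B="(b\<^sup>2 * ?a1 + ?k) + b\<^sup>2"])
      fix t :: real assume t: "0 \<le> t"
      have p: "\<psi> (mu1 + sg * (t / real (card B))) = b\<^sup>2 * F2 d t - 2 * c * (real n - 1) * sg * b * F1 d t"
        using s1t[of t] B(2) by (simp add: \<psi>_def)
      have h2: "\<bar>b\<^sup>2 * F2 d t\<bar> \<le> b\<^sup>2 * (?a0 + ?a1 * t + t\<^sup>2)"
        unfolding abs_mult abs_power2 using F2_abs[OF t, of d] by (intro mult_left_mono) auto
      have h1: "\<bar>2 * c * (real n - 1) * sg * b * F1 d t\<bar> \<le> ?k * ((2 + \<bar>d\<bar>) + t)"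
      proof -
        have "\<bar>2 * c * (real n - 1) * sg * b * F1 d t\<bar> = ?k * \<bar>F1 d t\<bar>"
          using sg b n by (simp add: abs_mult)
        also have "\<dots> \<le> ?k * ((2 + \<bar>d\<bar>) + t)"
          using F1_abs[of d t] t k by (intro mult_left_mono) auto
        finally show ?thesis .
      qed
      have "\<bar>\<psi> (mu1 + sg * (t / real (card B)))\<bar> \<le> b\<^sup>2 * (?a0 + ?a1 * t + t\<^sup>2) + ?k * ((2 + \<bar>d\<bar>) + t)"
        unfolding p using h1 h2 abs_triangle_ineq4[of "b\<^sup>2 * F2 d t" "2 * c * (real n - 1) * sg * b * F1 d t"] by linarith
      also have "\<dots> = (b\<^sup>2 * ?a0 + ?k * (2 + \<bar>d\<bar>)) + (b\<^sup>2 * ?a1 + ?k) * t + b\<^sup>2 * t\<^sup>2"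
        by (simp add: algebra_simps)
      also have "\<dots> \<le> ((b\<^sup>2 * ?a0 + ?k * (2 + \<bar>d\<bar>)) + (b\<^sup>2 * ?a1 + ?k)) + ((b\<^sup>2 * ?a1 + ?k) + b\<^sup>2) * t\<^sup>2"
        by (rule lin_to_sq[OF t]) (use k in auto)
      finally show "\<bar>\<psi> (mu1 + sg * (t / real (card B)))\<bar> \<le> (b\<^sup>2 * ?a0 + ?k * (2 + \<bar>d\<bar>)) + (b\<^sup>2 * ?a1 + ?k) + ((b\<^sup>2 * ?a1 + ?k) + b\<^sup>2) * t\<^sup>2" .
    qed
  qed
  have phib: "\<bar>\<phi> a\<bar> \<le> (2 * \<bar>c\<bar> * b * (2 + \<bar>d\<bar>) + 2 * \<bar>c\<bar> * \<bar>mu1\<bar> + 2 * c\<^sup>2 * (real n - 1) * sg) + 2 * \<bar>c\<bar> * \<bar>a\<bar>" for a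
  proof -
    have bs: "b * \<bar>s1 a\<bar> = \<bar>a - mu1\<bar>" using sg nz b by (simp add: b_def s1_def abs_mult abs_divide)
    have "\<bar>- 2 * c * b * F1 d (s1 a)\<bar> = 2 * \<bar>c\<bar> * b * \<bar>F1 d (s1 a)\<bar>" using b by (simp add: abs_mult)
    also have "\<dots> \<le> 2 * \<bar>c\<bar> * b * ((2 + \<bar>d\<bar>) + \<bar>s1 a\<bar>)"
      using F1_abs[of d "s1 a"] b by (intro mult_left_mono) auto
    also have "\<dots> = 2 * \<bar>c\<bar> * b * (2 + \<bar>d\<bar>) + 2 * \<bar>c\<bar> * \<bar>a - mu1\<bar>"
      using bs by (simp add: algebra_simps)
    also have "\<dots> \<le> 2 * \<bar>c\<bar> * b * (2 + \<bar>d\<bar>) + 2 * \<bar>c\<bar> * (\<bar>a\<bar> + \<bar>mu1\<bar>)"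
      by (intro add_left_mono mult_left_mono) auto
    finally have h: "\<bar>- 2 * c * b * F1 d (s1 a)\<bar> \<le> 2 * \<bar>c\<bar> * b * (2 + \<bar>d\<bar>) + 2 * \<bar>c\<bar> * (\<bar>a\<bar> + \<bar>mu1\<bar>)" .
    have "\<bar>2 * c\<^sup>2 * (real n - 1) * sg\<bar> = 2 * c\<^sup>2 * (real n - 1) * sg" using sg n by (simp add: abs_mult)
    then show ?thesis unfolding \<phi>_def
      using h abs_triangle_ineq[of "- 2 * c * b * F1 d (s1 a)" "2 * c\<^sup>2 * (real n - 1) * sg"]
      by (simp add: algebra_simps)
  qed
  have i2: "integrable ?Q (\<lambda>x. Sn B x * \<phi> (Mn B x))"
    by (rule F2(1)[OF sg B(1) Bne _ phib]) (use sg b n in auto)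
  have i3: "integrable ?Q (\<lambda>x. c\<^sup>2 * (Sn B x)\<^sup>2)"
    using F3(1)[OF sg B(1) Bne, of mu1] by simp
  interpret Qp: prob_space ?Q by (rule prob_Q[OF sg])
  have "integral\<^sup>L ?Q (\<lambda>x. Hin n mu1 mu2 sg c (Mn B x) (Sn B x))
      = (1 / sg\<^sup>2) * (integral\<^sup>L ?Q (\<lambda>x. \<psi> (Mn B x)) + integral\<^sup>L ?Q (\<lambda>x. Sn B x * \<phi> (Mn B x))
          + integral\<^sup>L ?Q (\<lambda>x. c\<^sup>2 * (Sn B x)\<^sup>2) + K)"
    unfolding eq using i1 i2 i3 by (simp add: Qp.prob_space)
  also have "integral\<^sup>L ?Q (\<lambda>x. \<psi> (Mn B x)) = EE (\<lambda>t. b\<^sup>2 * F2 d t - 2 * c * (real n - 1) * sg * b * F1 d t)"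
    using F1_int[OF sg B(1) Bne psim, of mu1] B(2) s1t by (simp add: Mn_def \<psi>_def)
  also have "\<dots> = b\<^sup>2 * G2 \<bar>d\<bar> - 2 * c * (real n - 1) * sg * b * G1 \<bar>d\<bar>"
  proof (rule hbE_Ex)
    have "hbE (\<lambda>t. b\<^sup>2 * F2 d t + (- 2 * c * (real n - 1) * sg * b) * F1 d t)
        (b\<^sup>2 * G2 \<bar>d\<bar> + (- 2 * c * (real n - 1) * sg * b) * G1 \<bar>d\<bar>)"
      by (intro hbE_add hbE_cmult outer1 outer2)
    then show "hbE (\<lambda>t. b\<^sup>2 * F2 d t - 2 * c * (real n - 1) * sg * b * F1 d t) (b\<^sup>2 * G2 \<bar>d\<bar> - 2 * c * (real n - 1) * sg * b * G1 \<bar>d\<bar>)"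
      by (rule hbE_cong) auto
  qed
  also have "integral\<^sup>L ?Q (\<lambda>x. Sn B x * \<phi> (Mn B x)) = (real n - 1) * sg * integral\<^sup>L ?Q (\<lambda>x. \<phi> (Mn B x))"
    using F2(2)[OF sg B(1) Bne _ phib, of mu1] B(2) sg b n by simp
  also have "integral\<^sup>L ?Q (\<lambda>x. \<phi> (Mn B x)) = EE (\<lambda>t. - 2 * c * b * F1 d t + 2 * c\<^sup>2 * (real n - 1) * sg)"
    using F1_int[OF sg B(1) Bne phim, of mu1] B(2) s1t by (simp add: Mn_def \<phi>_def)
  also have "\<dots> = - 2 * c * b * G1 \<bar>d\<bar> + 2 * c\<^sup>2 * (real n - 1) * sg"
    by (intro hbE_Ex hbE_add hbE_cmult outer1 hbE_const)
  also have "integral\<^sup>L ?Q (\<lambda>x. c\<^sup>2 * (Sn B x)\<^sup>2) = c\<^sup>2 * (real n * (real n - 1) * sg\<^sup>2)"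
    using F3(2)[OF sg B(1) Bne, of mu1] B(2) by simp
  finally have "integral\<^sup>L ?Q (\<lambda>x. Hin n mu1 mu2 sg c (Mn B x) (Sn B x))
    = (1 / sg\<^sup>2) * (b\<^sup>2 * G2 \<bar>d\<bar> - 2 * c * (real n - 1) * sg * b * G1 \<bar>d\<bar>
        + (real n - 1) * sg * (- 2 * c * b * G1 \<bar>d\<bar> + 2 * c\<^sup>2 * (real n - 1) * sg)
        + c\<^sup>2 * (real n * (real n - 1) * sg\<^sup>2) + K)" .
  also have "\<dots> = RF n c \<bar>d\<bar>"
    unfolding RF_def K_def b_def using sg nz by (simp add: field_simps power2_eq_square)
  finally show ?thesis by (simp add: d_def)
qed

lemma compK_meas:
  assumes S: "\<And>p. sets (K p) = sets borel" and p: "p \<in> I"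
  shows "(\<lambda>\<omega>. \<omega> p) \<in> borel_measurable (PiM I K)"
proof -
  have "(\<lambda>\<omega>. \<omega> p) \<in> measurable (PiM I K) (K p)" using p by (rule measurable_component_singleton)
  moreover have "measurable (PiM I K) (K p) = measurable (PiM I K) borel"
    by (rule measurable_cong_sets) (auto simp: S)
  ultimately show ?thesis by simp
qed

lemma MnK_meas:
  assumes S: "\<And>p. sets (K p) = sets borel" and B: "finite B" "B \<subseteq> I"
  shows "Mn B \<in> borel_measurable (PiM I K)"
  unfolding Mn_def
proof (rule borel_measurable_Min[OF B(1)])
  fix i assume "i \<in> B"
  then show "(\<lambda>x. x i) \<in> borel_measurable (PiM I K)" using B(2) by (intro compK_meas[where K=K, OF S]) auto
qed

lemma SnK_meas:
  assumes S: "\<And>p. sets (K p) = sets borel" and B: "finite B" "B \<subseteq> I"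
  shows "Sn B \<in> borel_measurable (PiM I K)"
  unfolding Sn_def
proof (intro borel_measurable_sum borel_measurable_diff MnK_meas[where K=K, OF S B])
  fix i assume "i \<in> B"
  then show "(\<lambda>x. x i) \<in> borel_measurable (PiM I K)" using B(2) by (intro compK_meas[where K=K, OF S]) auto
qed

lemma Tf_comp_meas:
  assumes [measurable]: "f \<in> borel_measurable M" "g \<in> borel_measurable M"
  shows "(\<lambda>x. Tf mu1 mu2 (f x) (g x)) \<in> borel_measurable M"
  unfolding Tf_def by measurable

lemma Mn_cong: "(\<And>p. p \<in> B \<Longrightarrow> \<omega> p = \<omega>' p) \<Longrightarrow> Mn B \<omega> = Mn B \<omega>'"
  unfolding Mn_def by (metis image_cong)

lemma Sn_cong: "(\<And>p. p \<in> B \<Longrightarrow> \<omega> p = \<omega>' p) \<Longrightarrow> Sn B \<omega> = Sn B \<omega>'"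
  unfolding Sn_def using Mn_cong[of B \<omega> \<omega>'] by (intro sum.cong) auto

lemma Ln_mono: "finite I \<Longrightarrow> B \<subseteq> I \<Longrightarrow> Ln B \<omega> \<le> Ln I \<omega>"
  unfolding Ln_def by (intro sum_mono2) auto

lemma Xmin_Mn: "Xmin n \<omega> i = Mn ({i} \<times> {..<n}) \<omega>"
proof -
  have "(\<lambda>p. \<omega> p) ` ({i} \<times> {..<n}) = (\<lambda>j. \<omega> (i, j)) ` {..<n}" by auto
  then show ?thesis unfolding Xmin_def Mn_def by simp
qed

lemma sum_single_block: "(\<Sum>p\<in>{i} \<times> A. f p) = (\<Sum>j\<in>A. f (i, j))"
proof -
  have "(\<Sum>p\<in>{i} \<times> A. f p) = (\<Sum>p\<in>(\<lambda>j. (i, j)) ` A. f p)"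
    by (intro sum.cong) auto
  also have "\<dots> = (\<Sum>j\<in>A. f (i, j))"
    by (subst sum.reindex) (auto simp: inj_on_def)
  finally show ?thesis .
qed

lemma Sstat_Sn: "Sstat n \<omega> = Sn ({1} \<times> {..<n}) \<omega> + Sn ({2} \<times> {..<n}) \<omega>"
  unfolding Sstat_def Sn_def sum_single_block Xmin_Mn by simp

lemma risk_integrand:
  "((d_est n c \<omega> - muS n mu1 mu2 \<omega>) / sg)\<^sup>2
   = ((Tf mu1 mu2 (Mn ({1} \<times> {..<n}) \<omega>) (Mn ({2} \<times> {..<n}) \<omega>)
        - c * (Sn ({1} \<times> {..<n}) \<omega> + Sn ({2} \<times> {..<n}) \<omega>)) / sg)\<^sup>2"
  unfolding d_est_def muS_def Z1_def Tf_def Sstat_Sn Xmin_Mn by (simp add: algebra_simps)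

lemma K_eq:
  "(\<lambda>(i, j). density lborel (\<lambda>x. ennreal (shexp_density (if i = 1 then mu1 else mu2) sg x)))
   = (\<lambda>p. Dm (if fst p = (1::nat) then mu1 else mu2) sg)"
  by (auto simp: fun_eq_iff Dm_def)

lemma risk_closed:
  assumes sg: "0 < sg" and n: "1 \<le> n"
  shows "risk n c mu1 mu2 sg = RF n c (mu_param n mu1 mu2 sg)"
proof -
  let ?B1 = "{1::nat} \<times> {..<n}"
  let ?B2 = "{2::nat} \<times> {..<n}"
  let ?K = "\<lambda>p. Dm (if fst p = (1::nat) then mu1 else mu2) sg"
  let ?R = "\<lambda>\<omega>. ((Tf mu1 mu2 (Mn ?B1 \<omega>) (Mn ?B2 \<omega>) - c * (Sn ?B1 \<omega> + Sn ?B2 \<omega>)) / sg)\<^sup>2"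
  have I: "{1, 2} \<times> {..<n} = ?B1 \<union> ?B2" by auto
  have disj: "?B1 \<inter> ?B2 = {}" by auto
  have fin: "finite ?B1" "finite ?B2" by auto
  have card: "card ?B1 = n" "card ?B2 = n" by (simp_all add: card_cartesian_product)
  have ne: "?B1 \<noteq> {}" "?B2 \<noteq> {}" using n by (auto simp: lessThan_empty_iff)
  have S: "\<And>p. sets (?K p) = sets borel" by simp
  have P: "\<And>p. prob_space (?K p)" using sg by (simp add: prob_Dm)
  have sl: "sample_law n mu1 mu2 sg = PiM (?B1 \<union> ?B2) ?K"
    unfolding sample_law_def K_eq I ..
  have psf: "product_sigma_finite ?K"
    unfolding product_sigma_finite_def using P prob_space_imp_sigma_finite by blast
  have mm: "Mn ?B1 \<in> borel_measurable (PiM (?B1 \<union> ?B2) ?K)" "Mn ?B2 \<in> borel_measurable (PiM (?B1 \<union> ?B2) ?K)"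
    by (rule MnK_meas[where K="?K", OF S]; auto)+
  have sm: "Sn ?B1 \<in> borel_measurable (PiM (?B1 \<union> ?B2) ?K)" "Sn ?B2 \<in> borel_measurable (PiM (?B1 \<union> ?B2) ?K)"
    by (rule SnK_meas[where K="?K", OF S]; auto)+
  have Rint: "integrable (PiM (?B1 \<union> ?B2) ?K) ?R"
  proof (rule PiM_integrable_bound)
    show "finite (?B1 \<union> ?B2)" by auto
    show "prob_space (?K p)" for p by (rule P)
    show "sets (?K p) = sets borel" for p by simp
    show "integrable (?K p) (\<lambda>x. x\<^sup>2)" for p using sg by (rule integrable_Dm_sq)
    show "?R \<in> borel_measurable (PiM (?B1 \<union> ?B2) ?K)"
      by (intro borel_measurable_power borel_measurable_divide borel_measurable_diff Tf_comp_meas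
          borel_measurable_times borel_measurable_add borel_measurable_const mm sm)
    fix \<omega> :: "nat \<times> nat \<Rightarrow> real"
    let ?L = "Ln (?B1 \<union> ?B2) \<omega>"
    let ?A0 = "\<bar>mu1\<bar> + \<bar>mu2\<bar>"
    let ?A1 = "2 + 2 * \<bar>c\<bar> * (1 + real n)"
    have L: "0 \<le> ?L" by (rule Ln_nonneg)
    have L1: "Ln ?B1 \<omega> \<le> ?L" "Ln ?B2 \<omega> \<le> ?L" by (rule Ln_mono; auto)+
    have M1: "\<bar>Mn ?B1 \<omega>\<bar> \<le> ?L" using Mn_bound[OF fin(1) ne(1), of \<omega>] L1 by simp
    have M2: "\<bar>Mn ?B2 \<omega>\<bar> \<le> ?L" using Mn_bound[OF fin(2) ne(2), of \<omega>] L1 by simp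
    have S1: "\<bar>Sn ?B1 \<omega>\<bar> \<le> (1 + real n) * ?L"
      using Sn_bound[OF fin(1) ne(1), of \<omega>] L1 card by (smt (verit) mult_left_mono of_nat_0_le_iff)
    have S2: "\<bar>Sn ?B2 \<omega>\<bar> \<le> (1 + real n) * ?L"
      using Sn_bound[OF fin(2) ne(2), of \<omega>] L1 card by (smt (verit) mult_left_mono of_nat_0_le_iff)
    have T: "\<bar>Tf mu1 mu2 (Mn ?B1 \<omega>) (Mn ?B2 \<omega>)\<bar> \<le> ?A0 + 2 * ?L"
      using Tf_abs[of mu1 mu2 "Mn ?B1 \<omega>" "Mn ?B2 \<omega>"] M1 M2 abs_triangle_ineq4[of "Mn ?B1 \<omega>" mu1] by linarith
    have cS: "\<bar>c * (Sn ?B1 \<omega> + Sn ?B2 \<omega>)\<bar> \<le> \<bar>c\<bar> * (2 * ((1 + real n) * ?L))"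
      unfolding abs_mult using S1 S2 abs_triangle_ineq[of "Sn ?B1 \<omega>" "Sn ?B2 \<omega>"] by (intro mult_left_mono) auto
    have X: "\<bar>Tf mu1 mu2 (Mn ?B1 \<omega>) (Mn ?B2 \<omega>) - c * (Sn ?B1 \<omega> + Sn ?B2 \<omega>)\<bar> \<le> ?A0 + ?A1 * ?L"
      using T cS abs_triangle_ineq4[of "Tf mu1 mu2 (Mn ?B1 \<omega>) (Mn ?B2 \<omega>)" "c * (Sn ?B1 \<omega> + Sn ?B2 \<omega>)"]
      by (simp add: algebra_simps)
    have "?A0 + ?A1 * ?L \<le> (?A0 + ?A1) * (1 + ?L)"
      using L by (simp add: algebra_simps)
    with X have X2: "\<bar>Tf mu1 mu2 (Mn ?B1 \<omega>) (Mn ?B2 \<omega>) - c * (Sn ?B1 \<omega> + Sn ?B2 \<omega>)\<bar> \<le> (?A0 + ?A1) * (1 + ?L)"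
      by linarith
    have "(Tf mu1 mu2 (Mn ?B1 \<omega>) (Mn ?B2 \<omega>) - c * (Sn ?B1 \<omega> + Sn ?B2 \<omega>))\<^sup>2 \<le> ((?A0 + ?A1) * (1 + ?L))\<^sup>2"
      using X2 by (metis abs_ge_zero power2_abs power_mono)
    then have "?R \<omega> \<le> ((?A0 + ?A1) * (1 + ?L))\<^sup>2 / sg\<^sup>2"
      using sg by (simp add: power_divide divide_right_mono)
    then show "\<bar>?R \<omega>\<bar> \<le> ((?A0 + ?A1)\<^sup>2 / sg\<^sup>2) * (1 + (\<Sum>j\<in>?B1 \<union> ?B2. \<bar>\<omega> j\<bar>))\<^sup>2"
      by (simp add: Ln_def power_mult_distrib)
  qed
  have "risk n c mu1 mu2 sg = integral\<^sup>L (PiM (?B1 \<union> ?B2) ?K) ?R"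
    unfolding risk_def sl risk_integrand ..
  also have "\<dots> = (\<integral>x. (\<integral>y. ?R (merge ?B1 ?B2 (x, y)) \<partial>PiM ?B2 ?K) \<partial>PiM ?B1 ?K)"
    by (rule product_sigma_finite.product_integral_fold[OF psf disj fin Rint])
  also have "\<dots> = (\<integral>x. Hin n mu1 mu2 sg c (Mn ?B1 x) (Sn ?B1 x) \<partial>PiM ?B1 (\<lambda>_. Dm mu1 sg))"
  proof -
    have K1: "PiM ?B1 ?K = PiM ?B1 (\<lambda>_. Dm mu1 sg)" by (rule PiM_cong) auto
    have K2: "PiM ?B2 ?K = PiM ?B2 (\<lambda>_. Dm mu2 sg)" by (rule PiM_cong) auto
    have "(\<integral>y. ?R (merge ?B1 ?B2 (x, y)) \<partial>PiM ?B2 (\<lambda>_. Dm mu2 sg)) = Hin n mu1 mu2 sg c (Mn ?B1 x) (Sn ?B1 x)" for x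
    proof -
      have m1: "Mn ?B1 (merge ?B1 ?B2 (x, y)) = Mn ?B1 x" "Sn ?B1 (merge ?B1 ?B2 (x, y)) = Sn ?B1 x" for y
        by (rule Mn_cong, auto simp: merge_def) (rule Sn_cong, auto simp: merge_def)
      have m2: "Mn ?B2 (merge ?B1 ?B2 (x, y)) = Mn ?B2 y" "Sn ?B2 (merge ?B1 ?B2 (x, y)) = Sn ?B2 y" for y
        by (rule Mn_cong, auto simp: merge_def) (rule Sn_cong, auto simp: merge_def)
      have "(\<integral>y. ?R (merge ?B1 ?B2 (x, y)) \<partial>PiM ?B2 (\<lambda>_. Dm mu2 sg))
          = (\<integral>y. ((Tf mu1 mu2 (Mn ?B1 x) (Mn ?B2 y) - c * (Sn ?B1 x + Sn ?B2 y)) / sg)\<^sup>2 \<partial>PiM ?B2 (\<lambda>_. Dm mu2 sg))"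
        by (simp only: m1 m2)
      also have "\<dots> = Hin n mu1 mu2 sg c (Mn ?B1 x) (Sn ?B1 x)"
        by (rule inner_block[OF sg n fin(2) card(2)])
      finally show ?thesis .
    qed
    then show ?thesis unfolding K1 K2 by simp
  qed
  also have "\<dots> = RF n c \<bar>dl n mu1 mu2 sg\<bar>"
    by (rule outer_block[OF sg n fin(1) card(1)])
  also have "\<bar>dl n mu1 mu2 sg\<bar> = mu_param n mu1 mu2 sg"
  proof -
    have mm: "max mu1 mu2 - min mu1 mu2 = \<bar>mu2 - mu1\<bar>" by (auto simp: max_def min_def)
    show ?thesis using sg unfolding dl_def mu_param_def mm by (simp add: abs_mult abs_divide)
  qed
  finally show ?thesis .
qed

lemma Rmu_closed:
  assumes n: "1 \<le> n"
  shows "Rmu n c m = RF n c \<bar>m\<bar>"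
proof -
  have "Rmu n c m = RF n c (mu_param n 0 (m / real n) 1)"
    unfolding Rmu_def by (rule risk_closed) (use n in auto)
  also have "mu_param n 0 (m / real n) 1 = \<bar>m\<bar>"
  proof (cases "0 \<le> m")
    case True
    then have "0 \<le> m / real n" by simp
    then show ?thesis using True n by (simp add: mu_param_def)
  next
    case False
    then have "m / real n < 0" using n by (simp add: divide_less_0_iff)
    then show ?thesis using False n by (simp add: mu_param_def)
  qed
  finally show ?thesis .
qed

definition Lf :: "nat \<Rightarrow> real \<Rightarrow> real" where
  "Lf n c = 2 / (real n)\<^sup>2 - 4 * c * (real n - 1) / real n + 2 * c\<^sup>2 * (real n - 1) * (2 * real n - 1)"

lemma G1_lim: "(G1 \<longlongrightarrow> 1) at_top"
proof -
  have "((\<lambda>m::real. m ^ 0 / exp m + m ^ 1 / exp m) \<longlongrightarrow> 0 + 0) at_top"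
    by (intro tendsto_add tendsto_power_div_exp_0)
  moreover have "(\<lambda>m::real. exp (- m) * (1 + m)) = (\<lambda>m::real. m ^ 0 / exp m + m ^ 1 / exp m)"
    by (rule ext) (simp add: exp_minus field_simps)
  ultimately have "((\<lambda>m::real. exp (- m) * (1 + m)) \<longlongrightarrow> 0) at_top"
    by simp
  then have "((\<lambda>m::real. 1 - exp (- m) * (1 + m) / 2) \<longlongrightarrow> 1 - 0 / 2) at_top"
    by (intro tendsto_intros) auto
  then show ?thesis by (simp add: G1_def[abs_def])
qed

lemma G2_lim: "(G2 \<longlongrightarrow> 2) at_top"
proof -
  have "((\<lambda>m::real. m ^ 2 / exp m + 3 * (m ^ 1 / exp m) + 3 * (m ^ 0 / exp m)) \<longlongrightarrow> 0 + 3 * 0 + 3 * 0) at_top"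
    by (intro tendsto_add tendsto_mult_left tendsto_power_div_exp_0)
  moreover have "(\<lambda>m::real. exp (- m) * (m\<^sup>2 + 3 * m + 3)) = (\<lambda>m::real. m ^ 2 / exp m + 3 * (m ^ 1 / exp m) + 3 * (m ^ 0 / exp m))"
    by (rule ext) (simp add: exp_minus field_simps)
  ultimately have "((\<lambda>m::real. exp (- m) * (m\<^sup>2 + 3 * m + 3)) \<longlongrightarrow> 0) at_top"
    by simp
  then have "((\<lambda>m::real. 2 - exp (- m) * (m\<^sup>2 + 3 * m + 3) / 2) \<longlongrightarrow> 2 - 0 / 2) at_top"
    by (intro tendsto_intros) auto
  then show ?thesis by (simp add: G2_def[abs_def])
qed

lemma RF_lim: "1 \<le> n \<Longrightarrow> ((\<lambda>m. RF n c m) \<longlongrightarrow> Lf n c) at_top"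
proof -
  assume n: "1 \<le> n"
  have "((\<lambda>m. G2 m / (real n)\<^sup>2 - 4 * c * (real n - 1) * G1 m / real n + 2 * c\<^sup>2 * (real n - 1) * (2 * real n - 1))
     \<longlongrightarrow> 2 / (real n)\<^sup>2 - 4 * c * (real n - 1) * 1 / real n + 2 * c\<^sup>2 * (real n - 1) * (2 * real n - 1)) at_top"
    using n by (intro tendsto_intros G1_lim G2_lim) auto
  then show ?thesis by (simp add: RF_def[abs_def] Lf_def)
qed

lemma G1_ge: "0 \<le> m \<Longrightarrow> 1 / 2 \<le> G1 m"
proof -
  have "1 + m \<le> exp m" by simp
  then have "exp (- m) * (1 + m) \<le> 1" by (simp add: exp_minus field_simps)
  then show ?thesis by (simp add: G1_def)
qed

lemma G1_le: "0 \<le> m \<Longrightarrow> G1 m \<le> 1"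
  by (simp add: G1_def)

lemma G1_big: "0 \<le> m \<Longrightarrow> 1 - 1 / (1 + m) \<le> G1 m"
proof -
  assume m: "0 \<le> m"
  have "1 + m + m\<^sup>2 / 2 \<le> exp m" using m by (rule exp_lower_Taylor_quadratic)
  then have "(1 + m)\<^sup>2 \<le> 2 * exp m" by (simp add: power2_eq_square algebra_simps)
  then have "(1 + m) * (1 + m) / exp m \<le> 2" by (simp add: power2_eq_square field_simps)
  then have "exp (- m) * (1 + m) \<le> 2 / (1 + m)" using m by (simp add: exp_minus field_simps)
  then show ?thesis by (simp add: G1_def field_simps)
qed

lemma RF_diff:
  "1 \<le> n \<Longrightarrow> RF n c m - RF n b m = (c - b) * (2 * (real n - 1)) * ((2 * real n - 1) * (c + b) - 2 * G1 m / real n)"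
  unfolding RF_def by (simp add: field_simps power2_eq_square)

lemma k0_eq: "n \<ge> 1 \<Longrightarrow> (2 * real n - 1) * (2 * k0 n) = 1 / real n"
  by (simp add: k0_def field_simps)
lemma k2_eq: "n \<ge> 1 \<Longrightarrow> (2 * real n - 1) * (2 * k2 n) = 2 / real n"
  by (simp add: k2_def field_simps)

lemma part4:
  assumes n: "2 \<le> n" and bc: "b < c" "c \<le> k0 n" and m: "0 \<le> m"
  shows "RF n c m < RF n b m"
proof -
  have n1: "1 \<le> n" using n by simp
  have p: "0 < 2 * real n - 1" using n by simp
  have "(2 * real n - 1) * (c + b) < (2 * real n - 1) * (2 * k0 n)"
    using bc p by (intro mult_strict_left_mono) auto
  also have "\<dots> = 1 / real n" by (rule k0_eq[OF n1])
  also have "\<dots> \<le> 2 * G1 m / real n" using G1_ge[OF m] n by (simp add: divide_right_mono)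
  finally have "(2 * real n - 1) * (c + b) - 2 * G1 m / real n < 0" by simp
  moreover have "0 < (c - b) * (2 * (real n - 1))" using bc n by simp
  ultimately have "(c - b) * (2 * (real n - 1)) * ((2 * real n - 1) * (c + b) - 2 * G1 m / real n) < 0"
    by (simp add: mult_pos_neg)
  then show ?thesis using RF_diff[OF n1, of c m b] by simp
qed

lemma part5:
  assumes n: "2 \<le> n" and bc: "k2 n \<le> c" "c < b" and m: "0 \<le> m"
  shows "RF n c m < RF n b m"
proof -
  have n1: "1 \<le> n" using n by simp
  have p: "0 < 2 * real n - 1" using n by simp
  have "2 * G1 m / real n \<le> 2 / real n" using G1_le[OF m] n by (simp add: divide_right_mono)
  also have "\<dots> = (2 * real n - 1) * (2 * k2 n)" by (rule k2_eq[OF n1, symmetric])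
  also have "\<dots> < (2 * real n - 1) * (c + b)"
    using bc p by (intro mult_strict_left_mono) auto
  finally have "0 < (2 * real n - 1) * (c + b) - 2 * G1 m / real n" by simp
  moreover have "(c - b) * (2 * (real n - 1)) < 0" using bc n by (simp add: mult_neg_pos)
  ultimately have "(c - b) * (2 * (real n - 1)) * ((2 * real n - 1) * (c + b) - 2 * G1 m / real n) < 0"
    by (simp add: mult_neg_pos)
  then show ?thesis using RF_diff[OF n1, of c m b] by simp
qed

lemma RF_le_Lf_k2:
  assumes n: "2 \<le> n" and m: "0 \<le> m"
  shows "RF n (k2 n) m \<le> Lf n (k2 n)"
proof -
  have n1: "1 \<le> real n" using n by simp
  have p: "0 < 2 * real n - 1" using n by simp
  have nz: "real n \<noteq> 0" using n1 by simp
  have eq0: "Lf n (k2 n) - RF n (k2 n) m = exp (- m) / (2 * (real n)\<^sup>2) * ((m\<^sup>2 + 3 * m + 3) - 4 * (real n - 1) * (1 + m) * (real n * k2 n))"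
    using nz unfolding Lf_def RF_def G1_def G2_def by (simp add: field_simps power2_eq_square)
  have nk: "real n * k2 n = 1 / (2 * real n - 1)" using nz p by (simp add: k2_def)
  have eq: "Lf n (k2 n) - RF n (k2 n) m = exp (- m) / (2 * (real n)\<^sup>2) * ((m\<^sup>2 + 3 * m + 3) - 4 * (real n - 1) * (1 + m) / (2 * real n - 1))"
    unfolding eq0 nk by simp
  have "4 * (real n - 1) / (2 * real n - 1) \<le> 2" using p by (simp add: field_simps)
  then have "4 * (real n - 1) / (2 * real n - 1) * (1 + m) \<le> 2 * (1 + m)" using m by (intro mult_right_mono) auto
  moreover have "2 * (1 + m) \<le> m\<^sup>2 + 3 * m + 3" using m by (simp add: power2_eq_square algebra_simps)
  ultimately have "0 \<le> (m\<^sup>2 + 3 * m + 3) - 4 * (real n - 1) * (1 + m) / (2 * real n - 1)" by simp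
  then have "0 \<le> Lf n (k2 n) - RF n (k2 n) m" unfolding eq by simp
  then show ?thesis by simp
qed

lemma Lf_min:
  assumes n: "2 \<le> n"
  shows "Lf n (k2 n) \<le> Lf n c"
proof -
  have n1: "1 \<le> real n" using n by simp
  have p: "0 < 2 * real n - 1" using n by simp
  have ak: "(2 * real n - 1) * k2 n = inverse (real n)"
    using n1 p unfolding k2_def by (simp add: field_simps)
  have "Lf n c - Lf n (k2 n) - 2 * (real n - 1) * (2 * real n - 1) * (c - k2 n)\<^sup>2
      = 4 * (real n - 1) * (c - k2 n) * ((2 * real n - 1) * k2 n - inverse (real n))"
    unfolding Lf_def by (simp add: divide_inverse algebra_simps power2_eq_square)
  then have eq: "Lf n c - Lf n (k2 n) = 2 * (real n - 1) * (2 * real n - 1) * (c - k2 n)\<^sup>2"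
    unfolding ak by simp
  have "0 \<le> 2 * (real n - 1) * (2 * real n - 1) * (c - k2 n)\<^sup>2" using n1 p by simp
  then show ?thesis using eq by simp
qed

theorem theorem5p2:
  fixes n :: nat
  assumes "n \<ge> 2"
  shows "(\<forall>c mu1 mu2 sg. sg > 0 \<longrightarrow>
            risk n c mu1 mu2 sg = Rmu n c (mu_param n mu1 mu2 sg))
       \<and> (\<forall>c. k0 n \<le> c \<and> c \<le> k2 n \<longrightarrow> admissible_D2 n c)
       \<and> (\<forall>c. c < k0 n \<or> k2 n < c \<longrightarrow> \<not> admissible_D2 n c)
       \<and> (\<forall>b c m. b < c \<and> c \<le> k0 n \<and> 0 \<le> m \<longrightarrow> Rmu n c m < Rmu n b m)
       \<and> (\<forall>b c m. k2 n \<le> c \<and> c < b \<and> 0 \<le> m \<longrightarrow> Rmu n c m < Rmu n b m)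
       \<and> (SUP m\<in>{0..}. ereal (Rmu n (k2 n) m))
           = (INF c. SUP m\<in>{0..}. ereal (Rmu n c m))"
proof -
  have n: "2 \<le> n" using assms .
  have n1: "1 \<le> n" using n by simp
  have p: "0 < 2 * real n - 1" using n by simp
  have R: "Rmu n c m = RF n c m" if "0 \<le> m" for c m
    using Rmu_closed[OF n1, of c m] that by simp
  have P1: "\<forall>c mu1 mu2 sg. sg > 0 \<longrightarrow> risk n c mu1 mu2 sg = Rmu n c (mu_param n mu1 mu2 sg)"
  proof (intro allI impI)
    fix c mu1 mu2 sg :: real assume sg: "sg > 0"
    have "0 \<le> mu_param n mu1 mu2 sg" using sg by (simp add: mu_param_def)
    then show "risk n c mu1 mu2 sg = Rmu n c (mu_param n mu1 mu2 sg)"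
      using risk_closed[OF sg n1, of c mu1 mu2] R by simp
  qed
  have P4: "\<forall>b c m. b < c \<and> c \<le> k0 n \<and> 0 \<le> m \<longrightarrow> Rmu n c m < Rmu n b m"
    using part4[OF n] R by auto
  have P5: "\<forall>b c m. k2 n \<le> c \<and> c < b \<and> 0 \<le> m \<longrightarrow> Rmu n c m < Rmu n b m"
    using part5[OF n] R by auto
  have P3: "\<forall>c. c < k0 n \<or> k2 n < c \<longrightarrow> \<not> admissible_D2 n c"
  proof (intro allI impI)
    fix c assume "c < k0 n \<or> k2 n < c"
    then obtain b where b: "\<And>m. 0 \<le> m \<Longrightarrow> Rmu n b m < Rmu n c m"
    proof
      assume "c < k0 n"
      then show ?thesis using P4 that[of "k0 n"] by auto
    next
      assume "k2 n < c"
      then show ?thesis using P5 that[of "k2 n"] by auto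
    qed
    have "(\<forall>m\<ge>0. Rmu n b m \<le> Rmu n c m) \<and> (\<exists>m\<ge>0. Rmu n b m < Rmu n c m)"
      using b b[of 0] less_imp_le by auto
    then show "\<not> admissible_D2 n c"
      unfolding admissible_D2_def by blast
  qed
  have G10: "G1 0 = 1 / 2" by (simp add: G1_def)
  have P2: "\<forall>c. k0 n \<le> c \<and> c \<le> k2 n \<longrightarrow> admissible_D2 n c"
  proof (intro allI impI)
    fix c assume c: "k0 n \<le> c \<and> c \<le> k2 n"
    show "admissible_D2 n c"
      unfolding admissible_D2_def
    proof
      assume "\<exists>b. (\<forall>m\<ge>0. Rmu n b m \<le> Rmu n c m) \<and> (\<exists>m\<ge>0. Rmu n b m < Rmu n c m)"
      then obtain b m0 where le: "\<And>m. 0 \<le> m \<Longrightarrow> Rmu n b m \<le> Rmu n c m"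
        and m0: "0 \<le> m0" "Rmu n b m0 < Rmu n c m0" by auto
      consider "c < b" | "b = c" | "b < c" by linarith
      then show False
      proof cases
        case 1
        have "(2 * real n - 1) * (2 * k0 n) < (2 * real n - 1) * (b + c)"
          using 1 c p by (intro mult_strict_left_mono) auto
        then have "1 / real n < (2 * real n - 1) * (b + c)" using k0_eq[OF n1] by simp
        moreover have "2 * G1 0 / real n = 1 / real n" using G10 by simp
        ultimately have "0 < (2 * real n - 1) * (b + c) - 2 * G1 0 / real n" by linarith
        moreover have "0 < (b - c) * (2 * (real n - 1))" using 1 n by simp
        ultimately have "0 < RF n b 0 - RF n c 0" using RF_diff[OF n1, of b 0 c] by simp
        then show False using le[of 0] R by simp
      next
        case 2
        then show False using m0 by simp
      next
        case 3
        define q where "q = (2 * real n - 1) * (b + c) * real n / 2"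
        have "(2 * real n - 1) * (b + c) < (2 * real n - 1) * (2 * k2 n)"
          using 3 c p by (intro mult_strict_left_mono) auto
        then have bc: "(2 * real n - 1) * (b + c) < 2 / real n" using k2_eq[OF n1] by simp
        then have q1: "q < 1" using n1 unfolding q_def by (simp add: field_simps)
        define m where "m = 1 / (1 - q)"
        have m: "0 \<le> m" using q1 by (simp add: m_def)
        have "1 / (1 + m) < 1 - q"
        proof -
          have "(1 - q) * (1 + m) = (1 - q) + 1" using q1 by (simp add: m_def field_simps)
          then have "1 < (1 - q) * (1 + m)" using q1 by simp
          then show ?thesis using m by (simp add: field_simps)
        qed
        then have "q < G1 m" using G1_big[OF m] by simp
        then have "(2 * real n - 1) * (b + c) < 2 * G1 m / real n"
          using n1 unfolding q_def by (simp add: field_simps)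
        then have "(2 * real n - 1) * (b + c) - 2 * G1 m / real n < 0" by simp
        moreover have "(b - c) * (2 * (real n - 1)) < 0" using 3 n by (simp add: mult_neg_pos)
        ultimately have "0 < RF n b m - RF n c m" using RF_diff[OF n1, of b m c] by (simp add: mult_neg_neg)
        then show False using le[OF m] R[OF m] by simp
      qed
    qed
  qed
  have P6: "(SUP m\<in>{0..}. ereal (Rmu n (k2 n) m)) = (INF c. SUP m\<in>{0..}. ereal (Rmu n c m))"
  proof (rule antisym)
    have supk2: "(SUP m\<in>{0..}. ereal (Rmu n (k2 n) m)) \<le> ereal (Lf n (k2 n))"
      by (rule SUP_least) (use RF_le_Lf_k2[OF n] R in auto)
    have lb: "ereal (Lf n c) \<le> (SUP m\<in>{0..}. ereal (Rmu n c m))" for c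
    proof (rule tendsto_upperbound)
      have lim: "((\<lambda>m. RF n c m) \<longlongrightarrow> Lf n c) at_top" by (rule RF_lim[OF n1])
      have ev: "eventually (\<lambda>m. RF n c m = Rmu n c m) at_top"
        using eventually_ge_at_top[of "0::real"] by eventually_elim (simp add: R)
      have "((\<lambda>m. Rmu n c m) \<longlongrightarrow> Lf n c) at_top"
        using tendsto_cong[THEN iffD1, OF ev lim] .
      then show "((\<lambda>m. ereal (Rmu n c m)) \<longlongrightarrow> ereal (Lf n c)) at_top" by simp
      show "eventually (\<lambda>m. ereal (Rmu n c m) \<le> (SUP m\<in>{0..}. ereal (Rmu n c m))) at_top"
        using eventually_ge_at_top[of "0::real"] by eventually_elim (auto intro: SUP_upper)
    qed simp
    show "(SUP m\<in>{0..}. ereal (Rmu n (k2 n) m)) \<le> (INF c. SUP m\<in>{0..}. ereal (Rmu n c m))"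
    proof (rule INF_greatest)
      fix c :: real
      have "ereal (Lf n (k2 n)) \<le> ereal (Lf n c)" using Lf_min[OF n] by simp
      then show "(SUP m\<in>{0..}. ereal (Rmu n (k2 n) m)) \<le> (SUP m\<in>{0..}. ereal (Rmu n c m))"
        using supk2 lb[of c] by (meson order_trans)
    qed
    show "(INF c. SUP m\<in>{0..}. ereal (Rmu n c m)) \<le> (SUP m\<in>{0..}. ereal (Rmu n (k2 n) m))"
      by (rule INF_lower) simp
  qed
  show ?thesis using P1 P2 P3 P4 P5 P6 by blast
qed

end
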